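(* Let $\tilde V\in C^2(\mathbb{R},\mathbb{R})$ satisfy: $\tilde V\ge 0$, $\tilde V(-1)=\tilde V(1)=0$, $\tilde V(x)>0$ for $x\in(-1,1)$, $\tilde V''(-1)>0$, $\tilde V''(1)>0$, $\tilde V(x)>0$ and $\tilde V'(x)x>0$ for all $|x|>1$, and $\tilde V(x)\to+\infty$ as $|x|\to+\infty$. Let $a:\mathbb{R}\to\mathbb{R}$ be bounded and continuous with $\liminf_{|t|\to\infty}a(t)=a_\infty>\inf_{t\in\mathbb{R}}a(t)=a(0)>0$, and let $\epsilon>0$. Let $W=\{x\in H^1_{loc}(\mathbb{R}): x+1\in H^1((-\infty,0]),\ x-1\in H^1([0,+\infty))\}$, $J_\epsilon(x)=\int_{-\infty}^{+\infty}\left(\frac12|\dot x|^2+a(\epsilon t)\tilde V(x(t))\right)dt$ and $\mathcal{B}_\epsilon=\inf_{x\in W}J_\epsilon(x)$. Then there exists a $(PS)_{\mathcal{B}_\epsilon}$ sequence for $J_\epsilon$.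
   Context: For $x\in W$ and $v\in H^1(\mathbb{R})$, $J_\epsilon'(x)v=\int_{-\infty}^{+\infty}\left(\dot x\dot v+a(\epsilon t)\tilde V'(x(t))v(t)\right)dt$, and $\|J_\epsilon'(x)\|_*=\sup\{J_\epsilon'(x)v: v\in H^1(\mathbb{R}),\ \|v\|_{H^1(\mathbb{R})}=1\}$. A sequence $(x_n)\subset W$ is a $(PS)_c$ sequence for $J_\epsilon$ if $J_\epsilon(x_n)\to c$ and $\|J_\epsilon'(x_n)\|_*\to0$ as $n\to\infty$. *)

theory Defs
  imports "HOL-Analysis.Analysis"
begin

definition is_wderiv :: "(real \<Rightarrow> real) \<Rightarrow> (real \<Rightarrow> real) \<Rightarrow> bool" where
  "is_wderiv x g \<longleftrightarrow>
     (\<forall>a b. set_integrable lborel {a..b} g \<and> set_integrable lborel {a..b} (\<lambda>t. (g t)^2)) \<and>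
     (\<forall>s t. x t - x s = (LBINT u=s..t. g u))"

definition H1loc :: "(real \<Rightarrow> real) set" where
  "H1loc = {x. \<exists>g. is_wderiv x g}"

text \<open>The (a.e. unique) weak derivative \<open>x\<close> dot.\<close>
definition wderiv :: "(real \<Rightarrow> real) \<Rightarrow> real \<Rightarrow> real" where
  "wderiv x = (SOME g. is_wderiv x g)"

definition H1 :: "(real \<Rightarrow> real) set" where
  "H1 = {v. v \<in> H1loc \<and> integrable lborel (\<lambda>t. (v t)^2)
            \<and> integrable lborel (\<lambda>t. (wderiv v t)^2)}"

definition H1_norm :: "(real \<Rightarrow> real) \<Rightarrow> real" where
  "H1_norm v = sqrt (LINT t|lborel. (v t)^2 + (wderiv v t)^2)"

definition W_set :: "(real \<Rightarrow> real) set" where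
  "W_set = {x. x \<in> H1loc
      \<and> set_integrable lborel {..0} (\<lambda>t. (x t + 1)^2)
      \<and> set_integrable lborel {..0} (\<lambda>t. (wderiv x t)^2)
      \<and> set_integrable lborel {0..} (\<lambda>t. (x t - 1)^2)
      \<and> set_integrable lborel {0..} (\<lambda>t. (wderiv x t)^2)}"

definition J_eps :: "(real \<Rightarrow> real) \<Rightarrow> (real \<Rightarrow> real) \<Rightarrow> real \<Rightarrow> (real \<Rightarrow> real) \<Rightarrow> real" where
  "J_eps V a \<epsilon> x = (LINT t|lborel. (1/2) * (wderiv x t)^2 + a (\<epsilon> * t) * V (x t))"

definition dJ_eps :: "(real \<Rightarrow> real) \<Rightarrow> (real \<Rightarrow> real) \<Rightarrow> real \<Rightarrow> (real \<Rightarrow> real) \<Rightarrow> (real \<Rightarrow> real) \<Rightarrow> real" where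
  "dJ_eps V a \<epsilon> x v = (LINT t|lborel. wderiv x t * wderiv v t + a (\<epsilon> * t) * deriv V (x t) * v t)"

definition dJ_norm :: "(real \<Rightarrow> real) \<Rightarrow> (real \<Rightarrow> real) \<Rightarrow> real \<Rightarrow> (real \<Rightarrow> real) \<Rightarrow> real" where
  "dJ_norm V a \<epsilon> x = Sup {dJ_eps V a \<epsilon> x v | v. v \<in> H1 \<and> H1_norm v = 1}"

definition B_eps :: "(real \<Rightarrow> real) \<Rightarrow> (real \<Rightarrow> real) \<Rightarrow> real \<Rightarrow> real" where
  "B_eps V a \<epsilon> = Inf (J_eps V a \<epsilon> ` W_set)"

definition PS_seq :: "(real \<Rightarrow> real) \<Rightarrow> (real \<Rightarrow> real) \<Rightarrow> real \<Rightarrow> real \<Rightarrow> (nat \<Rightarrow> real \<Rightarrow> real) \<Rightarrow> bool" where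
  "PS_seq V a \<epsilon> c xs \<longleftrightarrow> (\<forall>n. xs n \<in> W_set) \<and>
     (\<lambda>n. J_eps V a \<epsilon> (xs n)) \<longlonglongrightarrow> c \<and> (\<lambda>n. dJ_norm V a \<epsilon> (xs n)) \<longlonglongrightarrow> 0"

end

theory Submission
  imports Defs
begin



lemma ae_zero_of_boxes:
  fixes f :: "real \<Rightarrow> real"
  assumes f: "integrable lborel f"
    and z: "\<And>a b. a < b \<Longrightarrow> (LINT t:{a<..<b}|lborel. f t) = 0"
  shows "AE t in lborel. f t = 0"
proof -
  have fm[measurable]: "f \<in> borel_measurable borel" using f by auto
  define P where "P = (\<lambda>t. ennreal (max 0 (f t)))"
  define N where "N = (\<lambda>t. ennreal (max 0 (- f t)))"
  have Pm[measurable]: "P \<in> borel_measurable borel" unfolding P_def by measurable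
  have Nm[measurable]: "N \<in> borel_measurable borel" unfolding N_def by measurable
  have ip: "integrable lborel (\<lambda>t. max 0 (f t))" using f by (intro integrable_max) auto
  have in': "integrable lborel (\<lambda>t. max 0 (- f t))" using f by (intro integrable_max) auto
  have eqbox: "emeasure (density lborel P) {a<..<b} = emeasure (density lborel N) {a<..<b}" for a b
  proof (cases "a < b")
    case False
    then have "{a<..<b} = {}" by auto
    then show ?thesis by simp
  next
    case True
    have i1: "integrable lborel (\<lambda>t. indicator {a<..<b} t * max 0 (f t))"
      using integrable_mult_indicator[OF _ ip, of "{a<..<b}"] by simp
    have i2: "integrable lborel (\<lambda>t. indicator {a<..<b} t * max 0 (- f t))"
      using integrable_mult_indicator[OF _ in', of "{a<..<b}"] by simp
    have "emeasure (density lborel P) {a<..<b} = (\<integral>\<^sup>+ t. ennreal (indicator {a<..<b} t * max 0 (f t)) \<partial>lborel)"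
      unfolding P_def by (subst emeasure_density) (auto intro!: nn_integral_cong simp: indicator_def)
    also have "\<dots> = ennreal (LINT t|lborel. indicator {a<..<b} t * max 0 (f t))"
      by (rule nn_integral_eq_integral[OF i1]) auto
    also have "(LINT t|lborel. indicator {a<..<b} t * max 0 (f t)) = (LINT t|lborel. indicator {a<..<b} t * max 0 (- f t))"
    proof -
      have "(LINT t|lborel. indicator {a<..<b} t * max 0 (f t)) - (LINT t|lborel. indicator {a<..<b} t * max 0 (- f t))
          = (LINT t|lborel. indicator {a<..<b} t * max 0 (f t) - indicator {a<..<b} t * max 0 (- f t))"
        using i1 i2 by simp
      also have "\<dots> = (LINT t|lborel. indicator {a<..<b} t * f t)"
        by (intro Bochner_Integration.integral_cong) (auto simp: indicator_def max_def)
      also have "\<dots> = 0" using z[OF True] unfolding set_lebesgue_integral_def by simp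
      finally show ?thesis by simp
    qed
    also have "ennreal (LINT t|lborel. indicator {a<..<b} t * max 0 (- f t)) = (\<integral>\<^sup>+ t. ennreal (indicator {a<..<b} t * max 0 (- f t)) \<partial>lborel)"
      by (rule nn_integral_eq_integral[OF i2, symmetric]) auto
    also have "\<dots> = emeasure (density lborel N) {a<..<b}"
      unfolding N_def by (subst emeasure_density) (auto intro!: nn_integral_cong simp: indicator_def)
    finally show ?thesis .
  qed
  have sb: "sets (borel::real measure) = sigma_sets UNIV (range (\<lambda>(a, b). box a b))"
  proof -
    have "sets (borel::real measure) = sets (sigma UNIV (range (\<lambda>(a, b). box a (b::real))))"
      using borel_eq_box[where 'a=real] by (rule arg_cong)
    also have "\<dots> = sigma_sets UNIV (range (\<lambda>(a, b). box a b))"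
      by (rule sets_measure_of) auto
    finally show ?thesis .
  qed
  have "density lborel P = density lborel N"
  proof (rule measure_eqI_generator_eq[where E="range (\<lambda>(a, b). box a b)" and \<Omega>=UNIV and A="\<lambda>i. box (- real i) (real i)"])
    show "Int_stable (range (\<lambda>(a, b). box a (b::real)))"
      by (auto simp: Int_stable_def image_iff intro!: exI[where x="(max _ _, min _ _)"])
    show "range (\<lambda>(a, b). box a (b::real)) \<subseteq> Pow UNIV" by auto
    show "emeasure (density lborel P) X = emeasure (density lborel N) X" if "X \<in> range (\<lambda>(a, b). box a b)" for X
      using that eqbox by auto
    show "sets (density lborel P) = sigma_sets UNIV (range (\<lambda>(a, b). box a b))"
      by (simp only: sets_density sets_lborel sb)
    show "sets (density lborel N) = sigma_sets UNIV (range (\<lambda>(a, b). box a b))"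
      by (simp only: sets_density sets_lborel sb)
    show "range (\<lambda>i. box (- real i) (real i)) \<subseteq> range (\<lambda>(a, b). box a b)" by auto
    show "(\<Union>i. box (- real i) (real i)) = UNIV"
    proof -
      { fix t :: real obtain n where "\<bar>t\<bar> < real n" using reals_Archimedean2 by blast
        then have "t \<in> box (- real n) (real n)" by auto
        then have "t \<in> (\<Union>i. box (- real i) (real i))" by blast }
      then show ?thesis by auto
    qed
    show "emeasure (density lborel P) (box (- real i) (real i)) \<noteq> \<infinity>" for i
    proof -
      have "emeasure (density lborel P) (box (- real i) (real i)) \<le> emeasure (density lborel P) UNIV"
        by (intro emeasure_mono) auto
      also have "\<dots> = (\<integral>\<^sup>+ t. P t \<partial>lborel)" by (subst emeasure_density) auto
      also have "\<dots> = ennreal (LINT t|lborel. max 0 (f t))"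
        unfolding P_def by (rule nn_integral_eq_integral[OF ip]) auto
      finally show ?thesis using ennreal_neq_top infinity_ennreal_def neq_top_trans by metis
    qed
  qed
  then have "AE t in lborel. P t = N t"
    using sigma_finite_measure.density_unique_iff[OF sigma_finite_lborel, of P N] by simp
  then show ?thesis
    by eventually_elim (auto simp: P_def N_def max_def split: if_splits)
qed

lemma lbint_box:
  fixes g :: "real \<Rightarrow> real"
  assumes "c \<le> d"
  shows "(LBINT u=c..d. g u) = (LINT t:{c<..<d}|lborel. g t)"
  using assms by (simp add: interval_lebesgue_integral_def)

lemma wderiv_box:
  assumes "is_wderiv x g" "c \<le> d"
  shows "(LINT t:{c<..<d}|lborel. g t) = x d - x c"
  using assms unfolding is_wderiv_def by (simp add: lbint_box)

lemma wderiv_setint_box: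
  assumes "is_wderiv x g"
  shows "set_integrable lborel {c<..<d} g"
proof -
  have "set_integrable lborel {c..d} g" using assms unfolding is_wderiv_def by blast
  then show ?thesis by (rule set_integrable_subset) auto
qed

lemma wd_unique:
  assumes g: "is_wderiv x g" and k: "is_wderiv x k"
  shows "AE t in lborel. g t = k t"
proof -
  have "\<forall>n::nat. AE t in lborel. indicator {- real n<..<real n} t * (g t - k t) = 0"
  proof
    fix n :: nat
    define f where "f = (\<lambda>t. indicator {- real n<..<real n} t * (g t - k t))"
    have sg: "set_integrable lborel {- real n<..<real n} g" using wderiv_setint_box[OF g] .
    have sk: "set_integrable lborel {- real n<..<real n} k" using wderiv_setint_box[OF k] .
    have fi: "integrable lborel f"
    proof -
      have "set_integrable lborel {- real n<..<real n} (\<lambda>t. g t - k t)"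
        using sg sk by (rule set_integral_diff)
      then show ?thesis unfolding f_def set_integrable_def by simp
    qed
    have "AE t in lborel. f t = 0"
    proof (rule ae_zero_of_boxes[OF fi])
      fix a b :: real assume ab: "a < b"
      define c where "c = max a (- real n)"
      define d where "d = min b (real n)"
      have ind: "indicator {a<..<b} t * f t = indicator {c<..<d} t * (g t - k t)" for t
        unfolding f_def c_def d_def by (auto simp: indicator_def)
      show "(LINT t:{a<..<b}|lborel. f t) = 0"
      proof (cases "c \<le> d")
        case True
        have "(LINT t:{a<..<b}|lborel. f t) = (LINT t:{c<..<d}|lborel. g t - k t)"
          unfolding set_lebesgue_integral_def using ind by simp
        also have "\<dots> = (LINT t:{c<..<d}|lborel. g t) - (LINT t:{c<..<d}|lborel. k t)"
          by (rule set_integral_diff(2)[OF wderiv_setint_box[OF g] wderiv_setint_box[OF k]])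
        also have "\<dots> = 0" using wderiv_box[OF g True] wderiv_box[OF k True] by simp
        finally show ?thesis .
      next
        case False
        then have "{c<..<d} = {}" by auto
        then have "\<And>t. indicator {a<..<b} t * f t = 0" using ind by simp
        then have "(\<lambda>t. indicator {a<..<b} t * f t) = (\<lambda>t. 0)" by (rule ext)
        then show ?thesis unfolding set_lebesgue_integral_def by simp
      qed
    qed
    then show "AE t in lborel. indicator {- real n<..<real n} t * (g t - k t) = 0"
      unfolding f_def .
  qed
  then have "AE t in lborel. \<forall>n::nat. indicator {- real n<..<real n} t * (g t - k t) = 0"
    by (subst AE_all_countable) (simp del: mult_eq_0_iff)
  then show ?thesis
  proof eventually_elim
    case (elim t)
    obtain n :: nat where "\<bar>t\<bar> < real n" using reals_Archimedean2 by blast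
    then have "indicator {- real n<..<real n} t = (1::real)" by (auto simp: indicator_def)
    with elim[rule_format, of n] show ?case by simp
  qed
qed




lemma meas_of_wd:
  assumes "is_wderiv x g"
  shows "g \<in> borel_measurable borel"
proof (rule borel_measurable_LIMSEQ_real[where u="\<lambda>n t. indicator {- real n..real n} t * g t"])
  fix n :: nat
  have "set_integrable lborel {- real n..real n} g" using assms unfolding is_wderiv_def by blast
  then have "integrable lborel (\<lambda>t. indicator {- real n..real n} t * g t)"
    unfolding set_integrable_def by simp
  then show "(\<lambda>t. indicator {- real n..real n} t * g t) \<in> borel_measurable borel" by auto
next
  fix t :: real
  obtain N :: nat where "\<bar>t\<bar> < real N" using reals_Archimedean2 by blast
  then have "\<forall>n\<ge>N. indicator {- real n..real n} t * g t = g t"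
    by (auto simp: indicator_def)
  then show "(\<lambda>n. indicator {- real n..real n} t * g t) \<longlonglongrightarrow> g t"
    by (intro tendsto_eventually) (auto simp: eventually_sequentially)
qed

lemma cont_of_wd:
  assumes g: "is_wderiv x g"
  shows "continuous_on UNIV x"
proof (rule continuous_at_imp_continuous_on, intro ballI)
  fix t :: real
  define a where "a = t - 1"
  define b where "b = t + 1"
  have si: "set_integrable lborel {a..b} g" using g unfolding is_wderiv_def by blast
  then have gi: "g integrable_on {a..b}" by (rule set_borel_integral_eq_integral(1))
  have eq: "x s = x a + integral {a..s} g" if "s \<in> {a..b}" for s
  proof -
    have "set_integrable lborel {a..s} g" using g unfolding is_wderiv_def by blast
    then have "(LBINT u=a..s. g u) = integral {a..s} g"
      using that by (intro interval_integral_eq_integral) auto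
    moreover have "x s - x a = (LBINT u=a..s. g u)" using g unfolding is_wderiv_def by blast
    ultimately show ?thesis by simp
  qed
  have "continuous_on {a..b} (\<lambda>s. x a + integral {a..s} g)"
    by (intro continuous_intros indefinite_integral_continuous_1 gi)
  then have "continuous_on {a..b} x"
    using eq by (metis (no_types, lifting) continuous_on_cong)
  moreover have "t \<in> interior {a..b}" unfolding a_def b_def by auto
  ultimately show "isCont x t"
    by (rule continuous_on_interior)
qed

lemma setint_le_sub:
  fixes f :: "real \<Rightarrow> real"
  assumes "A \<subseteq> B" "A \<in> sets borel" "set_integrable lborel B f" "\<And>t. t \<in> B \<Longrightarrow> 0 \<le> f t"
  shows "set_integrable lborel A f" "(LINT t:A|lborel. f t) \<le> (LINT t:B|lborel. f t)"
proof -
  show 1: "set_integrable lborel A f"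
    by (rule set_integrable_subset[OF assms(3)]) (simp_all only: sets_lborel assms(1,2))
  have pw: "indicator A t * f t \<le> indicator B t * f t" for t
  proof (cases "t \<in> B")
    case True
    then show ?thesis using assms(4)[OF True] by (cases "t \<in> A") (auto simp: indicator_def)
  next
    case False
    then have "t \<notin> A" using assms(1) by blast
    with False show ?thesis by simp
  qed
  have i1: "integrable lborel (\<lambda>t. indicator A t * f t)" using 1 unfolding set_integrable_def by simp
  have i2: "integrable lborel (\<lambda>t. indicator B t * f t)" using assms(3) unfolding set_integrable_def by simp
  show "(LINT t:A|lborel. f t) \<le> (LINT t:B|lborel. f t)"
    unfolding set_lebesgue_integral_def using integral_mono[OF i1 i2 pw] by simp
qed

lemma diff_bound:
  assumes g: "is_wderiv u g" and rs: "r \<le> s"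
  shows "\<bar>u s - u r\<bar> \<le> ((LINT t:{r<..<s}|lborel. (g t)^2) + (s - r)) / 2"
proof -
  have sg: "set_integrable lborel {r<..<s} g" by (rule wderiv_setint_box[OF g])
  have sg2: "set_integrable lborel {r<..<s} (\<lambda>t. (g t)^2)"
  proof -
    have "set_integrable lborel {r..s} (\<lambda>t. (g t)^2)" using g unfolding is_wderiv_def by blast
    then show ?thesis by (rule set_integrable_subset) auto
  qed
  have s1: "set_integrable lborel {r<..<s} (\<lambda>t. 1::real)"
  proof -
    have "integrable lborel (indicat_real {r<..<s})"
      by (rule integrable_real_indicator) (simp_all add: rs)
    then show ?thesis unfolding set_integrable_def by simp
  qed
  have sa: "set_integrable lborel {r<..<s} (\<lambda>t. \<bar>g t\<bar>)"
    by (rule set_integrable_abs[OF sg])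
  have "\<bar>u s - u r\<bar> = \<bar>LINT t:{r<..<s}|lborel. g t\<bar>" using wderiv_box[OF g rs] by simp
  also have "\<dots> \<le> (LINT t:{r<..<s}|lborel. \<bar>g t\<bar>)"
    unfolding set_lebesgue_integral_def
    by (rule order_trans[OF integral_abs_bound]) (simp add: abs_mult)
  also have "\<dots> \<le> (LINT t:{r<..<s}|lborel. ((g t)^2 + 1) / 2)"
  proof (rule set_integral_mono[OF sa])
    show "set_integrable lborel {r<..<s} (\<lambda>t. ((g t)^2 + 1) / 2)"
      using sg2 s1 by (intro set_integrable_divide set_integral_add)
    show "\<bar>g t\<bar> \<le> ((g t)^2 + 1) / 2" for t
    proof -
      have "0 \<le> (\<bar>g t\<bar> - 1)^2" by simp
      then show ?thesis by (simp add: power2_eq_square algebra_simps abs_mult_self)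
    qed
  qed
  also have "\<dots> = ((LINT t:{r<..<s}|lborel. (g t)^2) + (LINT t:{r<..<s}|lborel. 1)) / 2"
    using sg2 s1 by (simp add: set_integral_add set_integral_divide_zero)
  also have "(LINT t:{r<..<s}|lborel. (1::real)) = s - r"
    using rs by (simp add: set_lebesgue_integral_def)
  finally show ?thesis .
qed




lemma exists_small:
  fixes u :: "real \<Rightarrow> real"
  assumes si: "set_integrable lborel {c<..<d} (\<lambda>t. (u t)^2)" and cd: "c < d" and M: "0 \<le> M"
    and lt: "(LINT t:{c<..<d}|lborel. (u t)^2) < (d - c) * M^2"
  shows "\<exists>r. c < r \<and> r < d \<and> \<bar>u r\<bar> \<le> M"
proof (rule ccontr)
  assume "\<not> ?thesis"
  then have big: "\<And>r. r \<in> {c<..<d} \<Longrightarrow> M^2 \<le> (u r)^2"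
    using M by (auto simp: abs_le_square_iff[symmetric] not_le intro: less_imp_le)
  have sM: "set_integrable lborel {c<..<d} (\<lambda>t. M^2)"
  proof -
    have "integrable lborel (indicat_real {c<..<d})"
      by (rule integrable_real_indicator) (simp_all add: less_imp_le[OF cd])
    then show ?thesis unfolding set_integrable_def by simp
  qed
  have "(LINT t:{c<..<d}|lborel. M^2) \<le> (LINT t:{c<..<d}|lborel. (u t)^2)"
    by (rule set_integral_mono[OF sM si big])
  moreover have "(LINT t:{c<..<d}|lborel. M^2) = (d - c) * M^2"
    using cd by (simp add: set_lebesgue_integral_def)
  ultimately show False using lt by simp
qed

lemma local_bound:
  assumes g: "is_wderiv u g" and cs: "c \<le> s" "s \<le> c + 2"
    and si: "set_integrable lborel {c<..<c+2} (\<lambda>t. (u t)^2)"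
    and A: "(LINT t:{c<..<c+2}|lborel. (u t)^2) \<le> A"
    and B: "(LINT t:{c<..<c+2}|lborel. (g t)^2) \<le> B"
  shows "\<bar>u s\<bar> \<le> A + 2 + B / 2"
proof -
  have A0: "0 \<le> A"
  proof -
    have "0 \<le> (LINT t:{c<..<c+2}|lborel. (u t)^2)"
      unfolding set_lebesgue_integral_def by (intro Bochner_Integration.integral_nonneg) auto
    then show ?thesis using A by simp
  qed
  have sg2: "set_integrable lborel {c<..<c+2} (\<lambda>t. (g t)^2)"
  proof -
    have "set_integrable lborel {c..c+2} (\<lambda>t. (g t)^2)" using g unfolding is_wderiv_def by blast
    then show ?thesis by (rule set_integrable_subset) auto
  qed
  have "(LINT t:{c<..<c+2}|lborel. (u t)^2) < (c + 2 - c) * (A + 1)^2"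
    using A A0 by (simp add: power2_eq_square algebra_simps) (smt (verit) mult_nonneg_nonneg)
  then have "\<exists>r. c < r \<and> r < c + 2 \<and> \<bar>u r\<bar> \<le> A + 1"
    using A0 by (intro exists_small[OF si]) auto
  then obtain r where r: "c < r" "r < c + 2" "\<bar>u r\<bar> \<le> A + 1" by blast
  have sub: "\<And>p q. c \<le> p \<Longrightarrow> q \<le> c + 2 \<Longrightarrow> (LINT t:{p<..<q}|lborel. (g t)^2) \<le> B"
  proof -
    fix p q assume pq: "c \<le> p" "q \<le> c + 2"
    have "(LINT t:{p<..<q}|lborel. (g t)^2) \<le> (LINT t:{c<..<c+2}|lborel. (g t)^2)"
      by (rule setint_le_sub(2)[OF _ _ sg2]) (use pq in auto)
    then show "(LINT t:{p<..<q}|lborel. (g t)^2) \<le> B" using B by simp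
  qed
  have d: "\<bar>u s - u r\<bar> \<le> (B + 2) / 2"
  proof (cases "r \<le> s")
    case True
    have "\<bar>u s - u r\<bar> \<le> ((LINT t:{r<..<s}|lborel. (g t)^2) + (s - r)) / 2"
      by (rule diff_bound[OF g True])
    also have "\<dots> \<le> (B + 2) / 2" using sub[of r s] r cs by simp
    finally show ?thesis .
  next
    case False
    have "\<bar>u r - u s\<bar> \<le> ((LINT t:{s<..<r}|lborel. (g t)^2) + (r - s)) / 2"
      using False by (intro diff_bound[OF g]) simp
    also have "\<dots> \<le> (B + 2) / 2" using sub[of s r] r cs by simp
    finally show ?thesis by (simp add: abs_minus_commute)
  qed
  have d2: "\<bar>u s - u r\<bar> \<le> B / 2 + 1" using d by (simp add: add_divide_distrib)
  have "\<bar>u s\<bar> \<le> \<bar>u r\<bar> + \<bar>u s - u r\<bar>" by (rule order_trans[OF _ abs_triangle_ineq]) simp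
  then show ?thesis using d2 r(3) by linarith
qed

lemma is_wderiv_add_const:
  assumes "is_wderiv x g"
  shows "is_wderiv (\<lambda>t. x t + k) g"
  using assms unfolding is_wderiv_def by simp

lemma H1loc_wd: "x \<in> H1loc \<Longrightarrow> is_wderiv x (wderiv x)"
  unfolding H1loc_def wderiv_def by (metis (mono_tags) mem_Collect_eq someI)




lemma W_wd: "x \<in> W_set \<Longrightarrow> is_wderiv x (wderiv x)"
  unfolding W_set_def by (auto intro: H1loc_wd)

lemma W_bdd:
  assumes xW: "x \<in> W_set"
  shows "\<exists>R. \<forall>t. \<bar>x t\<bar> \<le> R"
proof -
  define g where "g = wderiv x"
  have g: "is_wderiv x g" unfolding g_def by (rule W_wd[OF xW])
  have gm: "is_wderiv (\<lambda>t. x t - 1) g" using is_wderiv_add_const[OF g, of "-1"] by simp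
  have gp: "is_wderiv (\<lambda>t. x t + 1) g" using is_wderiv_add_const[OF g, of "1"] by simp
  have i1: "set_integrable lborel {0..} (\<lambda>t. (x t - 1)^2)" using xW unfolding W_set_def by blast
  have i2: "set_integrable lborel {0..} (\<lambda>t. (g t)^2)" using xW unfolding W_set_def g_def by blast
  have i3: "set_integrable lborel {..0} (\<lambda>t. (x t + 1)^2)" using xW unfolding W_set_def by blast
  have i4: "set_integrable lborel {..0} (\<lambda>t. (g t)^2)" using xW unfolding W_set_def g_def by blast
  define A1 where "A1 = (LINT t:{0..}|lborel. (x t - 1)^2)"
  define A2 where "A2 = (LINT t:{0..}|lborel. (g t)^2)"
  define B1 where "B1 = (LINT t:{..0}|lborel. (x t + 1)^2)"
  define B2 where "B2 = (LINT t:{..0}|lborel. (g t)^2)"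
  have right: "\<bar>x s\<bar> \<le> A1 + 3 + A2 / 2" if s: "2 \<le> s" for s
  proof -
    have sub: "{s-2<..<s-2+2} \<subseteq> {0..}" using s by auto
    have "\<bar>x s - 1\<bar> \<le> A1 + 2 + A2 / 2"
    proof (rule local_bound[OF gm, of "s-2"])
      show "set_integrable lborel {s-2<..<s-2+2} (\<lambda>t. (x t - 1)^2)"
        by (rule setint_le_sub(1)[OF sub _ i1]) auto
      show "(LINT t:{s-2<..<s-2+2}|lborel. (x t - 1)^2) \<le> A1"
        unfolding A1_def by (rule setint_le_sub(2)[OF sub _ i1]) auto
      show "(LINT t:{s-2<..<s-2+2}|lborel. (g t)^2) \<le> A2"
        unfolding A2_def by (rule setint_le_sub(2)[OF sub _ i2]) auto
    qed auto
    then show ?thesis by linarith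
  qed
  have left: "\<bar>x s\<bar> \<le> B1 + 3 + B2 / 2" if s: "s \<le> -2" for s
  proof -
    have sub: "{s<..<s+2} \<subseteq> {..0}" using s by auto
    have "\<bar>x s + 1\<bar> \<le> B1 + 2 + B2 / 2"
    proof (rule local_bound[OF gp, of "s"])
      show "set_integrable lborel {s<..<s+2} (\<lambda>t. (x t + 1)^2)"
        by (rule setint_le_sub(1)[OF sub _ i3]) auto
      show "(LINT t:{s<..<s+2}|lborel. (x t + 1)^2) \<le> B1"
        unfolding B1_def by (rule setint_le_sub(2)[OF sub _ i3]) auto
      show "(LINT t:{s<..<s+2}|lborel. (g t)^2) \<le> B2"
        unfolding B2_def by (rule setint_le_sub(2)[OF sub _ i4]) auto
    qed auto
    then show ?thesis by linarith
  qed
  have "compact (x ` {-2..2})"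
    by (intro compact_continuous_image continuous_on_subset[OF cont_of_wd[OF g]]) auto
  then obtain M where M: "\<And>y. y \<in> x ` {-2..2} \<Longrightarrow> norm y \<le> M"
    using compact_imp_bounded bounded_iff by metis
  have "\<bar>x s\<bar> \<le> max M (max (A1 + 3 + A2 / 2) (B1 + 3 + B2 / 2))" for s
  proof (cases "2 \<le> s")
    case True then show ?thesis using right[OF True] by simp
  next
    case F1: False
    show ?thesis
    proof (cases "s \<le> -2")
      case True then show ?thesis using left[OF True] by simp
    next
      case False
      then have "x s \<in> x ` {-2..2}" using F1 by auto
      then show ?thesis using M by fastforce
    qed
  qed
  then show ?thesis by blast
qed




lemma int_split:
  fixes f :: "real \<Rightarrow> real"
  assumes "set_integrable lborel {..0} f" "set_integrable lborel {0..} f"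
  shows "integrable lborel f"
proof -
  have "set_integrable lborel ({..0} \<union> {0..}) f"
    by (rule set_integrable_Un[OF assms]) auto
  moreover have "{..0} \<union> {0..} = (UNIV::real set)" by auto
  ultimately show ?thesis unfolding set_integrable_def by simp
qed

lemma lip_of_deriv:
  fixes f f' :: "real \<Rightarrow> real"
  assumes d: "\<And>y. y \<in> {-K..K} \<Longrightarrow> DERIV f y :> f' y" and b: "\<And>y. y \<in> {-K..K} \<Longrightarrow> \<bar>f' y\<bar> \<le> L"
    and y: "y \<in> {-K..K}" and z: "z \<in> {-K..K}"
  shows "\<bar>f z - f y\<bar> \<le> L * \<bar>z - y\<bar>"
proof -
  have main: "\<bar>f q - f p\<bar> \<le> L * \<bar>q - p\<bar>" if pq: "p < q" "p \<in> {-K..K}" "q \<in> {-K..K}" for p q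
  proof -
    obtain w where w: "p < w" "w < q" "f q - f p = (q - p) * f' w"
      using MVT2[OF pq(1), of f f'] d pq by force
    have "w \<in> {-K..K}" using w pq by auto
    then have "\<bar>f' w\<bar> \<le> L" by (rule b)
    then show ?thesis using w pq(1) by (simp add: abs_mult mult.commute mult_right_mono)
  qed
  consider "y < z" | "z < y" | "y = z" by linarith
  then show ?thesis
  proof cases
    case 1 then show ?thesis using main[OF 1 y z] by simp
  next
    case 2 then show ?thesis using main[OF 2 z y] by (simp add: abs_minus_commute)
  next
    case 3 then show ?thesis by simp
  qed
qed

locale ctx =
  fixes V a :: "real \<Rightarrow> real" and \<epsilon> :: real
  assumes V_diff: "\<forall>x. V differentiable at x"
    and V'_diff: "\<forall>x. deriv V differentiable at x"
    and V''_cont: "continuous_on UNIV (deriv (deriv V))"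
    and V_nonneg: "\<forall>x. V x \<ge> 0"
    and V_zero1: "V 1 = 0" and V_zerom1: "V (-1) = 0"
    and V_coercive: "filterlim V at_top at_infinity"
    and a_bdd: "bounded (range a)"
    and a_cont: "continuous_on UNIV a"
    and a_min: "\<And>t. a 0 \<le> a t"
    and a0_pos: "a 0 > 0"
    and eps_pos: "\<epsilon> > 0"
begin

lemma dV: "DERIV V y :> deriv V y"
  using V_diff DERIV_deriv_iff_real_differentiable by blast

lemma d2V: "DERIV (deriv V) y :> deriv (deriv V) y"
  using V'_diff DERIV_deriv_iff_real_differentiable by blast

lemma V_cont: "continuous_on UNIV V"
  by (rule continuous_at_imp_continuous_on) (use dV DERIV_isCont in blast)

lemma V'_cont: "continuous_on UNIV (deriv V)"
  by (rule continuous_at_imp_continuous_on) (use d2V DERIV_isCont in blast)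

lemma V'_one: "deriv V 1 = 0"
  by (rule DERIV_local_min[OF dV, of 1]) (use V_nonneg V_zero1 in auto)

lemma V'_mone: "deriv V (-1) = 0"
  by (rule DERIV_local_min[OF dV, of 1]) (use V_nonneg V_zerom1 in auto)

lemma a_bound: "\<exists>A>0. \<forall>t. \<bar>a t\<bar> \<le> A"
proof -
  obtain A where "\<forall>y\<in>range a. norm y \<le> A" using a_bdd bounded_iff by metis
  then have "\<forall>t. \<bar>a t\<bar> \<le> max A 1" by (metis rangeI real_norm_def max.coboundedI1)
  then show ?thesis by (intro exI[of _ "max A 1"]) auto
qed

lemma a_pos: "a t > 0" using a_min[of t] a0_pos by simp

lemma V_local:
  "\<exists>L\<ge>0. \<forall>y\<in>{-K..K}. \<forall>z\<in>{-K..K}. \<bar>deriv V z - deriv V y\<bar> \<le> L * \<bar>z - y\<bar>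
      \<and> \<bar>V z - V y - deriv V y * (z - y)\<bar> \<le> L * (z - y)^2"
proof -
  have "compact (deriv (deriv V) ` {-K..K})"
    by (intro compact_continuous_image continuous_on_subset[OF V''_cont]) auto
  then obtain L0 where L0: "\<And>w. w \<in> deriv (deriv V) ` {-K..K} \<Longrightarrow> norm w \<le> L0"
    using compact_imp_bounded bounded_iff by metis
  define L where "L = max L0 0"
  have Lb: "\<bar>deriv (deriv V) y\<bar> \<le> L" if "y \<in> {-K..K}" for y
    using L0[of "deriv (deriv V) y"] that unfolding L_def by auto
  have lip: "\<bar>deriv V z - deriv V y\<bar> \<le> L * \<bar>z - y\<bar>" if "y \<in> {-K..K}" "z \<in> {-K..K}" for y z
    by (rule lip_of_deriv[OF d2V Lb that])
  have tay: "\<bar>V z - V y - deriv V y * (z - y)\<bar> \<le> L * (z - y)^2" if yz: "y \<in> {-K..K}" "z \<in> {-K..K}" for y z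
  proof -
    have main: "\<bar>V q - V p - deriv V r * (q - p)\<bar> \<le> L * (q - p)^2"
      if pq: "p < q" "p \<in> {-K..K}" "q \<in> {-K..K}" and r: "r = p \<or> r = q" for p q r
    proof -
      obtain w where w: "p < w" "w < q" "V q - V p = (q - p) * deriv V w"
        using MVT2[OF pq(1), of V "deriv V"] dV by force
      have wK: "w \<in> {-K..K}" and rK: "r \<in> {-K..K}" using w pq r by auto
      have "\<bar>deriv V w - deriv V r\<bar> \<le> L * \<bar>w - r\<bar>" by (rule lip[OF rK wK])
      also have "\<dots> \<le> L * (q - p)"
        using w r pq(1) unfolding L_def by (intro mult_left_mono) auto
      finally have "\<bar>deriv V w - deriv V r\<bar> \<le> L * (q - p)" .
      then have "(q - p) * \<bar>deriv V w - deriv V r\<bar> \<le> (q - p) * (L * (q - p))"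
        using pq(1) by (intro mult_left_mono) auto
      moreover have "\<bar>V q - V p - deriv V r * (q - p)\<bar> = (q - p) * \<bar>deriv V w - deriv V r\<bar>"
      proof -
        have "V q - V p - deriv V r * (q - p) = (q - p) * (deriv V w - deriv V r)"
          using w(3) by (simp add: algebra_simps)
        then show ?thesis using pq(1) by (simp add: abs_mult)
      qed
      ultimately show ?thesis by (simp add: power2_eq_square algebra_simps)
    qed
    consider "y < z" | "z < y" | "y = z" by linarith
    then show ?thesis
    proof cases
      case 1 then show ?thesis using main[OF 1 yz, of y] by simp
    next
      case 2
      have "\<bar>V y - V z - deriv V y * (y - z)\<bar> \<le> L * (y - z)^2" using main[OF 2 yz(2,1), of y] by simp
      then show ?thesis by (simp add: abs_minus_commute power2_commute algebra_simps)
    next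
      case 3 then show ?thesis by simp
    qed
  qed
  show ?thesis using lip tay unfolding L_def by (intro exI[of _ L]) (auto simp: L_def)
qed

end




context ctx begin

lemma V_pts:
  assumes K: "1 \<le> K" and L: "\<forall>y\<in>{-K..K}. \<forall>z\<in>{-K..K}. \<bar>deriv V z - deriv V y\<bar> \<le> L * \<bar>z - y\<bar>
      \<and> \<bar>V z - V y - deriv V y * (z - y)\<bar> \<le> L * (z - y)^2"
    and z: "\<bar>z\<bar> \<le> K"
  shows "V z \<le> L * (z - 1)^2" "V z \<le> L * (z + 1)^2"
    "\<bar>deriv V z\<bar> \<le> L * \<bar>z - 1\<bar>" "\<bar>deriv V z\<bar> \<le> L * \<bar>z + 1\<bar>"
proof -
  have zK: "z \<in> {-K..K}" using z by auto
  have oK: "1 \<in> {-K..K}" "-1 \<in> {-K..K}" using K by auto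
  show "V z \<le> L * (z - 1)^2" using L[rule_format, OF oK(1) zK] V_zero1 V'_one by simp (meson abs_ge_self order_trans)
  show "V z \<le> L * (z + 1)^2" using L[rule_format, OF oK(2) zK] V_zerom1 V'_mone by simp (meson abs_ge_self order_trans)
  show "\<bar>deriv V z\<bar> \<le> L * \<bar>z - 1\<bar>" using L[rule_format, OF oK(1) zK] V'_one by simp
  show "\<bar>deriv V z\<bar> \<le> L * \<bar>z + 1\<bar>" using L[rule_format, OF oK(2) zK] V'_mone by simp
qed

lemma cont_aV:
  assumes "continuous_on UNIV y"
  shows "continuous_on UNIV (\<lambda>t. a (\<epsilon> * t) * V (y t))"
proof -
  have 1: "continuous_on UNIV (\<lambda>t. a (\<epsilon> * t))"
    by (rule continuous_on_compose2[OF a_cont]) (auto intro!: continuous_intros)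
  have 2: "continuous_on UNIV (\<lambda>t. V (y t))"
    by (rule continuous_on_compose2[OF V_cont assms]) auto
  show ?thesis using 1 2 by (intro continuous_intros)
qed

lemma cont_aV':
  assumes "continuous_on UNIV y"
  shows "continuous_on UNIV (\<lambda>t. a (\<epsilon> * t) * deriv V (y t))"
proof -
  have 1: "continuous_on UNIV (\<lambda>t. a (\<epsilon> * t))"
    by (rule continuous_on_compose2[OF a_cont]) (auto intro!: continuous_intros)
  have 2: "continuous_on UNIV (\<lambda>t. deriv V (y t))"
    by (rule continuous_on_compose2[OF V'_cont assms]) auto
  show ?thesis using 1 2 by (intro continuous_intros)
qed

definition Q :: "(real \<Rightarrow> real) \<Rightarrow> real \<Rightarrow> real" where "Q x t = indicator {..0} t * (x t + 1)^2 + indicator {0..} t * (x t - 1)^2"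

lemma Q_int: "x \<in> W_set \<Longrightarrow> integrable lborel (Q x)"
proof -
  assume xW: "x \<in> W_set"
  have i1: "integrable lborel (\<lambda>t. indicator {..0} t * (x t + 1)^2)"
    using xW unfolding W_set_def set_integrable_def by simp
  have i2: "integrable lborel (\<lambda>t. indicator {0..} t * (x t - 1)^2)"
    using xW unfolding W_set_def set_integrable_def by simp
  show ?thesis unfolding Q_def[abs_def] using i1 i2 by simp
qed

lemma Q_nonneg: "0 \<le> Q x t" unfolding Q_def by (simp add: indicator_def)

lemma wd_sq_int: "x \<in> W_set \<Longrightarrow> integrable lborel (\<lambda>t. (wderiv x t)^2)"
  by (rule int_split) (auto simp: W_set_def)

lemma W_local:
  assumes xW: "x \<in> W_set"
  shows "\<exists>K L. 1 \<le> K \<and> 0 \<le> L \<and> (\<forall>t. \<bar>x t\<bar> \<le> K) \<and> (\<forall>y\<in>{-K..K}. \<forall>z\<in>{-K..K}. \<bar>deriv V z - deriv V y\<bar> \<le> L * \<bar>z - y\<bar>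
      \<and> \<bar>V z - V y - deriv V y * (z - y)\<bar> \<le> L * (z - y)^2)"
proof -
  obtain R where R: "\<forall>t. \<bar>x t\<bar> \<le> R" using W_bdd[OF xW] by blast
  define K where "K = max R 1"
  obtain L where "L \<ge> 0" "\<forall>y\<in>{-K..K}. \<forall>z\<in>{-K..K}. \<bar>deriv V z - deriv V y\<bar> \<le> L * \<bar>z - y\<bar>
      \<and> \<bar>V z - V y - deriv V y * (z - y)\<bar> \<le> L * (z - y)^2" using V_local by blast
  moreover have "\<forall>t. \<bar>x t\<bar> \<le> K" using R unfolding K_def by (metis max.coboundedI1)
  ultimately show ?thesis unfolding K_def by (intro exI[of _ K] exI[of _ L]) (auto simp: K_def)
qed

lemma aV_le_Q:
  assumes xW: "x \<in> W_set"
  shows "\<exists>C\<ge>0. \<forall>t. 0 \<le> a (\<epsilon> * t) * V (x t) \<and> a (\<epsilon> * t) * V (x t) \<le> C * Q x t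
              \<and> \<bar>a (\<epsilon> * t) * deriv V (x t)\<bar> \<le> C * sqrt (Q x t)"
proof -
  obtain K L where KL: "1 \<le> K" "0 \<le> L" "\<forall>t. \<bar>x t\<bar> \<le> K"
    "\<forall>y\<in>{-K..K}. \<forall>z\<in>{-K..K}. \<bar>deriv V z - deriv V y\<bar> \<le> L * \<bar>z - y\<bar>
      \<and> \<bar>V z - V y - deriv V y * (z - y)\<bar> \<le> L * (z - y)^2"
    using W_local[OF xW] by blast
  obtain A where A: "A > 0" "\<forall>t. \<bar>a t\<bar> \<le> A" using a_bound by blast
  have "0 \<le> a (\<epsilon> * t) * V (x t) \<and> a (\<epsilon> * t) * V (x t) \<le> (A * L) * Q x t
        \<and> \<bar>a (\<epsilon> * t) * deriv V (x t)\<bar> \<le> (A * L) * sqrt (Q x t)" for t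
  proof -
    note P = V_pts[OF KL(1) KL(4) KL(3)[rule_format, of t]]
    have a0: "0 \<le> a (\<epsilon> * t)" "a (\<epsilon> * t) \<le> A" using a_pos A(2) by (auto simp: less_imp_le abs_le_iff)
    have Vn: "0 \<le> V (x t)" using V_nonneg by simp
    have q1: "t \<le> 0 \<Longrightarrow> (x t + 1)^2 \<le> Q x t" unfolding Q_def by simp
    have q2: "0 \<le> t \<Longrightarrow> (x t - 1)^2 \<le> Q x t" unfolding Q_def by simp
    have vq: "V (x t) \<le> L * Q x t"
    proof (cases "t \<le> 0")
      case True then show ?thesis using P(2) q1[OF True] KL(2) by (meson mult_left_mono order_trans)
    next
      case False then show ?thesis using P(1) q2 KL(2) by (meson mult_left_mono order_trans linear)
    qed
    have dq: "\<bar>deriv V (x t)\<bar> \<le> L * sqrt (Q x t)"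
    proof (cases "t \<le> 0")
      case True
      have "\<bar>x t + 1\<bar> \<le> sqrt (Q x t)" using q1[OF True] by (metis real_sqrt_abs real_sqrt_le_mono)
      then show ?thesis using P(4) KL(2) by (meson mult_left_mono order_trans)
    next
      case False
      have "\<bar>x t - 1\<bar> \<le> sqrt (Q x t)" using q2 False by (metis real_sqrt_abs real_sqrt_le_mono linear)
      then show ?thesis using P(3) KL(2) by (meson mult_left_mono order_trans)
    qed
    have "a (\<epsilon> * t) * V (x t) \<le> A * (L * Q x t)"
      using a0 Vn vq by (intro mult_mono) auto
    moreover have "\<bar>a (\<epsilon> * t) * deriv V (x t)\<bar> \<le> A * (L * sqrt (Q x t))"
      using a0 dq by (simp add: abs_mult) (intro mult_mono, auto)
    ultimately show ?thesis using a0 Vn by (simp add: mult_ac)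
  qed
  then show ?thesis using A KL(2) by (intro exI[of _ "A * L"]) auto
qed

definition Fx :: "(real \<Rightarrow> real) \<Rightarrow> real \<Rightarrow> real" where "Fx x t = (1/2) * (wderiv x t)^2 + a (\<epsilon> * t) * V (x t)"

lemma aV_int:
  assumes xW: "x \<in> W_set"
  shows "integrable lborel (\<lambda>t. a (\<epsilon> * t) * V (x t))"
proof -
  obtain C where C: "C \<ge> 0" "\<forall>t. 0 \<le> a (\<epsilon> * t) * V (x t) \<and> a (\<epsilon> * t) * V (x t) \<le> C * Q x t"
    using aV_le_Q[OF xW] by blast
  have m: "(\<lambda>t. a (\<epsilon> * t) * V (x t)) \<in> borel_measurable lborel"
    using borel_measurable_continuous_onI[OF cont_aV[OF cont_of_wd[OF W_wd[OF xW]]]] by simp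
  show ?thesis
  proof (rule Bochner_Integration.integrable_bound[OF _ m])
    show "integrable lborel (\<lambda>t. C * Q x t)" using Q_int[OF xW] by simp
    show "AE t in lborel. norm (a (\<epsilon> * t) * V (x t)) \<le> norm (C * Q x t)"
    proof (rule AE_I2)
      fix t
      show "norm (a (\<epsilon> * t) * V (x t)) \<le> norm (C * Q x t)"
        using C(2)[rule_format, of t] by (simp only: real_norm_def) arith
    qed
  qed
qed

lemma F_int: "x \<in> W_set \<Longrightarrow> integrable lborel (Fx x)"
  unfolding Fx_def[abs_def] using wd_sq_int aV_int by simp

lemma J_eq: "J_eps V a \<epsilon> x = (LINT t|lborel. Fx x t)"
  unfolding J_eps_def Fx_def by simp

lemma F_nonneg: "0 \<le> Fx x t"
  unfolding Fx_def using a_pos[of "\<epsilon> * t"] V_nonneg by (simp add: less_imp_le)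

end




lemma sq_comb:
  fixes f g :: "real \<Rightarrow> real"
  assumes fm: "f \<in> borel_measurable borel" and gm: "g \<in> borel_measurable borel" and S: "S \<in> sets borel"
    and fi: "set_integrable lborel S (\<lambda>t. (f t)^2)" and gi: "set_integrable lborel S (\<lambda>t. (g t)^2)"
  shows "set_integrable lborel S (\<lambda>t. (f t - c * g t)^2)"
proof -
  have fi': "integrable lborel (\<lambda>t. indicator S t * (f t)^2)" using fi unfolding set_integrable_def by simp
  have gi': "integrable lborel (\<lambda>t. indicator S t * (g t)^2)" using gi unfolding set_integrable_def by simp
  have "integrable lborel (\<lambda>t. indicator S t * (f t - c * g t)^2)"
  proof (rule Bochner_Integration.integrable_bound)
    show "integrable lborel (\<lambda>t. 2 * (indicator S t * (f t)^2) + (2 * c^2) * (indicator S t * (g t)^2))"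
      using fi' gi' by simp
    show "(\<lambda>t. indicator S t * (f t - c * g t)^2) \<in> borel_measurable lborel"
      using fm gm S by measurable
    show "AE t in lborel. norm (indicator S t * (f t - c * g t)^2)
       \<le> norm (2 * (indicator S t * (f t)^2) + (2 * c^2) * (indicator S t * (g t)^2))"
    proof (rule AE_I2)
      fix t
      have "(f t - c * g t)^2 \<le> 2 * (f t)^2 + 2 * c^2 * (g t)^2"
      proof -
        have "0 \<le> (f t + c * g t)^2" by simp
        then show ?thesis by (simp add: power2_eq_square algebra_simps)
      qed
      then show "norm (indicator S t * (f t - c * g t)^2)
       \<le> norm (2 * (indicator S t * (f t)^2) + (2 * c^2) * (indicator S t * (g t)^2))"
        by (simp add: indicator_def)
    qed
  qed
  then show ?thesis unfolding set_integrable_def by simp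
qed

lemma wd_interval_integrable:
  assumes "is_wderiv x g"
  shows "interval_lebesgue_integrable lborel (ereal s) (ereal t) g"
proof -
  have "set_integrable lborel {min s t..max s t} g" using assms unfolding is_wderiv_def by blast
  then have a: "set_integrable lborel {min s t<..<max s t} g"
    by (rule set_integrable_subset) auto
  show ?thesis unfolding interval_lebesgue_integrable_def
    using a by (cases "s \<le> t") (auto simp: min_def max_def)
qed

lemma is_wderiv_comb:
  assumes g: "is_wderiv x g" and h: "is_wderiv v h"
  shows "is_wderiv (\<lambda>t. x t - c * v t) (\<lambda>t. g t - c * h t)"
  unfolding is_wderiv_def
proof (intro conjI allI)
  fix p q :: real
  have sg: "set_integrable lborel {p..q} g" and sh: "set_integrable lborel {p..q} h"
    using g h unfolding is_wderiv_def by blast+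
  show "set_integrable lborel {p..q} (\<lambda>t. g t - c * h t)"
    using sg sh by (intro set_integral_diff set_integrable_mult_right) auto
  show "set_integrable lborel {p..q} (\<lambda>t. (g t - c * h t)^2)"
    by (rule sq_comb[OF meas_of_wd[OF g] meas_of_wd[OF h]]) (use g h in \<open>auto simp: is_wderiv_def\<close>)
next
  fix s t :: real
  have "(LBINT u=s..t. g u - c * h u) = (LBINT u=s..t. g u) - (LBINT u=s..t. c * h u)"
    by (rule interval_lebesgue_integral_diff) (use wd_interval_integrable[OF g] wd_interval_integrable[OF h] in auto)
  also have "(LBINT u=s..t. c * h u) = c * (LBINT u=s..t. h u)" by simp
  finally have e: "(LBINT u=s..t. g u - c * h u) = (LBINT u=s..t. g u) - c * (LBINT u=s..t. h u)" .
  have e1: "x t - x s = (LBINT u=s..t. g u)" and e2: "v t - v s = (LBINT u=s..t. h u)"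
    using g h unfolding is_wderiv_def by blast+
  show "x t - c * v t - (x s - c * v s) = (LBINT u=s..t. g u - c * h u)"
    unfolding e e1[symmetric] e2[symmetric] by (simp add: algebra_simps)
qed




lemma H1_wd: "v \<in> H1 \<Longrightarrow> is_wderiv v (wderiv v)"
  unfolding H1_def by (auto intro: H1loc_wd)

lemma H1_int: "v \<in> H1 \<Longrightarrow> integrable lborel (\<lambda>t. (v t)^2)" "v \<in> H1 \<Longrightarrow> integrable lborel (\<lambda>t. (wderiv v t)^2)"
  unfolding H1_def by auto

lemma H1_unit:
  assumes v: "v \<in> H1" and n: "H1_norm v = 1"
  shows "(LINT t|lborel. (v t)^2) \<le> 1" "(LINT t|lborel. (wderiv v t)^2) \<le> 1"
    "(LINT t|lborel. (v t)^2) + (LINT t|lborel. (wderiv v t)^2) = 1"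
proof -
  have "(LINT t|lborel. (v t)^2 + (wderiv v t)^2) = 1"
  proof -
    have "sqrt (LINT t|lborel. (v t)^2 + (wderiv v t)^2) = 1" using n unfolding H1_norm_def .
    then show ?thesis by simp
  qed
  then show e: "(LINT t|lborel. (v t)^2) + (LINT t|lborel. (wderiv v t)^2) = 1"
    using H1_int[OF v] by simp
  have "0 \<le> (LINT t|lborel. (v t)^2)" "0 \<le> (LINT t|lborel. (wderiv v t)^2)" by auto
  then show "(LINT t|lborel. (v t)^2) \<le> 1" "(LINT t|lborel. (wderiv v t)^2) \<le> 1" using e by linarith+
qed

lemma box_le_total:
  fixes f :: "real \<Rightarrow> real"
  assumes "integrable lborel f" "\<And>t. 0 \<le> f t"
  shows "set_integrable lborel {p<..<q} f" "(LINT t:{p<..<q}|lborel. f t) \<le> (LINT t|lborel. f t)"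
proof -
  have u: "set_integrable lborel UNIV f" using assms(1) unfolding set_integrable_def by simp
  show "set_integrable lborel {p<..<q} f" by (rule setint_le_sub(1)[OF _ _ u]) (use assms in auto)
  have "(LINT t:{p<..<q}|lborel. f t) \<le> (LINT t:UNIV|lborel. f t)"
    by (rule setint_le_sub(2)[OF _ _ u]) (use assms in auto)
  then show "(LINT t:{p<..<q}|lborel. f t) \<le> (LINT t|lborel. f t)"
    unfolding set_lebesgue_integral_def by simp
qed

lemma H1_sup:
  assumes v: "v \<in> H1" and n: "H1_norm v = 1"
  shows "\<bar>v s\<bar> \<le> 4"
proof -
  note u = H1_unit[OF v n]
  have "\<bar>v s\<bar> \<le> 1 + 2 + 1 / 2"
  proof (rule local_bound[OF H1_wd[OF v], of "s - 2"])
    show "set_integrable lborel {s - 2<..<s - 2 + 2} (\<lambda>t. (v t)^2)"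
      by (rule box_le_total(1)[OF H1_int(1)[OF v]]) simp
    show "(LINT t:{s - 2<..<s - 2 + 2}|lborel. (v t)^2) \<le> 1"
      using box_le_total(2)[OF H1_int(1)[OF v], of "s-2" "s-2+2"] u(1) by simp
    show "(LINT t:{s - 2<..<s - 2 + 2}|lborel. (wderiv v t)^2) \<le> 1"
      using box_le_total(2)[OF H1_int(2)[OF v], of "s-2" "s-2+2"] u(2) by simp
  qed auto
  then show ?thesis by simp
qed

lemma setint_UNIV: "integrable lborel f \<Longrightarrow> set_integrable lborel S (f::real \<Rightarrow> real)" if "S \<in> sets borel"
  using that unfolding set_integrable_def by (intro integrable_mult_indicator) auto

lemma comb_W:
  assumes xW: "x \<in> W_set" and v: "v \<in> H1"
  shows "(\<lambda>t. x t - c * v t) \<in> W_set"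
    "AE t in lborel. wderiv (\<lambda>t. x t - c * v t) t = wderiv x t - c * wderiv v t"
proof -
  define y where "y = (\<lambda>t. x t - c * v t)"
  have gx: "is_wderiv x (wderiv x)" by (rule W_wd[OF xW])
  have gv: "is_wderiv v (wderiv v)" by (rule H1_wd[OF v])
  have gy: "is_wderiv y (\<lambda>t. wderiv x t - c * wderiv v t)" unfolding y_def by (rule is_wderiv_comb[OF gx gv])
  then have yH: "y \<in> H1loc" unfolding H1loc_def by blast
  have ae: "AE t in lborel. wderiv y t = wderiv x t - c * wderiv v t"
    by (rule wd_unique[OF H1loc_wd[OF yH] gy])
  then show "AE t in lborel. wderiv (\<lambda>t. x t - c * v t) t = wderiv x t - c * wderiv v t"
    unfolding y_def .
  have xm: "x \<in> borel_measurable borel" by (rule borel_measurable_continuous_onI[OF cont_of_wd[OF gx]])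
  have vm: "v \<in> borel_measurable borel" by (rule borel_measurable_continuous_onI[OF cont_of_wd[OF gv]])
  have wxm: "wderiv x \<in> borel_measurable borel" by (rule meas_of_wd[OF gx])
  have wvm: "wderiv v \<in> borel_measurable borel" by (rule meas_of_wd[OF gv])
  have wym: "wderiv y \<in> borel_measurable borel" by (rule meas_of_wd[OF H1loc_wd[OF yH]])
  have wd_sq: "set_integrable lborel S (\<lambda>t. (wderiv y t)^2)"
    if S: "S \<in> sets borel" and sx: "set_integrable lborel S (\<lambda>t. (wderiv x t)^2)" for S
  proof -
    have "set_integrable lborel S (\<lambda>t. (wderiv x t - c * wderiv v t)^2)"
      by (rule sq_comb[OF wxm wvm S sx setint_UNIV[OF S H1_int(2)[OF v]]])
    moreover have "AE t in lborel. indicator S t * (wderiv x t - c * wderiv v t)^2 = indicator S t * (wderiv y t)^2"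
      using ae by eventually_elim simp
    ultimately show ?thesis unfolding set_integrable_def
      using integrable_cong_AE[of "\<lambda>t. indicator S t * (wderiv x t - c * wderiv v t)^2" lborel
             "\<lambda>t. indicator S t * (wderiv y t)^2"] S wxm wvm wym by simp
  qed
  have p1: "set_integrable lborel {..0} (\<lambda>t. (y t + 1)^2)"
  proof -
    have xp: "(\<lambda>t. x t + 1) \<in> borel_measurable borel" using xm by measurable
    have "set_integrable lborel {..0} (\<lambda>t. ((x t + 1) - c * v t)^2)"
      by (rule sq_comb[OF xp vm _ _ setint_UNIV[OF _ H1_int(1)[OF v]]]) (use xW in \<open>auto simp: W_set_def\<close>)
    then show ?thesis unfolding y_def by (simp add: algebra_simps)
  qed
  have p2: "set_integrable lborel {0..} (\<lambda>t. (y t - 1)^2)"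
  proof -
    have xp: "(\<lambda>t. x t - 1) \<in> borel_measurable borel" using xm by measurable
    have "set_integrable lborel {0..} (\<lambda>t. ((x t - 1) - c * v t)^2)"
      by (rule sq_comb[OF xp vm _ _ setint_UNIV[OF _ H1_int(1)[OF v]]]) (use xW in \<open>auto simp: W_set_def\<close>)
    then show ?thesis unfolding y_def by (simp add: algebra_simps)
  qed
  have "y \<in> W_set" unfolding W_set_def
    using yH p1 p2 wd_sq[of "{..0}"] wd_sq[of "{0..}"] xW unfolding W_set_def by auto
  then show "(\<lambda>t. x t - c * v t) \<in> W_set" unfolding y_def .
qed




context ctx begin

definition G :: "(real \<Rightarrow> real) \<Rightarrow> (real \<Rightarrow> real) \<Rightarrow> real \<Rightarrow> real" where
  "G x v t = wderiv x t * wderiv v t + a (\<epsilon> * t) * deriv V (x t) * v t"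

lemma dJ_eq: "dJ_eps V a \<epsilon> x v = (LINT t|lborel. G x v t)"
  unfolding dJ_eps_def G_def by simp

lemma G_int:
  assumes xW: "x \<in> W_set" and v: "v \<in> H1"
  shows "integrable lborel (G x v)"
proof -
  have gx: "is_wderiv x (wderiv x)" by (rule W_wd[OF xW])
  have gv: "is_wderiv v (wderiv v)" by (rule H1_wd[OF v])
  have wxm: "wderiv x \<in> borel_measurable borel" by (rule meas_of_wd[OF gx])
  have wvm: "wderiv v \<in> borel_measurable borel" by (rule meas_of_wd[OF gv])
  have vm: "v \<in> borel_measurable borel" by (rule borel_measurable_continuous_onI[OF cont_of_wd[OF gv]])
  have i1: "integrable lborel (\<lambda>t. wderiv x t * wderiv v t)"
  proof (rule Bochner_Integration.integrable_bound)
    show "integrable lborel (\<lambda>t. ((wderiv x t)^2 + (wderiv v t)^2) / 2)"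
      using wd_sq_int[OF xW] H1_int(2)[OF v] by simp
    show "(\<lambda>t. wderiv x t * wderiv v t) \<in> borel_measurable lborel" using wxm wvm by measurable
    show "AE t in lborel. norm (wderiv x t * wderiv v t) \<le> norm (((wderiv x t)^2 + (wderiv v t)^2) / 2)"
    proof (rule AE_I2)
      fix t
      have "0 \<le> (\<bar>wderiv x t\<bar> - \<bar>wderiv v t\<bar>)^2" by simp
      then have "\<bar>wderiv x t\<bar> * \<bar>wderiv v t\<bar> \<le> ((wderiv x t)^2 + (wderiv v t)^2) / 2"
        by (simp add: power2_eq_square algebra_simps abs_mult_self)
      then show "norm (wderiv x t * wderiv v t) \<le> norm (((wderiv x t)^2 + (wderiv v t)^2) / 2)"
        by (simp add: abs_mult)
    qed
  qed
  obtain C where C: "C \<ge> 0" "\<forall>t. \<bar>a (\<epsilon> * t) * deriv V (x t)\<bar> \<le> C * sqrt (Q x t)"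
    using aV_le_Q[OF xW] by blast
  have i2: "integrable lborel (\<lambda>t. a (\<epsilon> * t) * deriv V (x t) * v t)"
  proof (rule Bochner_Integration.integrable_bound)
    show "integrable lborel (\<lambda>t. C * ((Q x t + (v t)^2) / 2))"
      using Q_int[OF xW] H1_int(1)[OF v] by simp
    have "(\<lambda>t. a (\<epsilon> * t) * deriv V (x t)) \<in> borel_measurable lborel"
      using borel_measurable_continuous_onI[OF cont_aV'[OF cont_of_wd[OF gx]]] by simp
    then show "(\<lambda>t. a (\<epsilon> * t) * deriv V (x t) * v t) \<in> borel_measurable lborel" using vm by measurable
    show "AE t in lborel. norm (a (\<epsilon> * t) * deriv V (x t) * v t) \<le> norm (C * ((Q x t + (v t)^2) / 2))"
    proof (rule AE_I2)
      fix t
      have q: "0 \<le> Q x t" by (rule Q_nonneg)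
      have "0 \<le> (sqrt (Q x t) - \<bar>v t\<bar>)^2" by simp
      then have s: "sqrt (Q x t) * \<bar>v t\<bar> \<le> (Q x t + (v t)^2) / 2"
        using q by (simp add: power2_eq_square algebra_simps abs_mult_self)
      have "\<bar>a (\<epsilon> * t) * deriv V (x t) * v t\<bar> = \<bar>a (\<epsilon> * t) * deriv V (x t)\<bar> * \<bar>v t\<bar>" by (simp add: abs_mult)
      also have "\<dots> \<le> C * sqrt (Q x t) * \<bar>v t\<bar>" using C(2) by (intro mult_right_mono) auto
      also have "\<dots> \<le> C * ((Q x t + (v t)^2) / 2)" using s C(1) by (simp add: mult.assoc mult_left_mono)
      finally show "norm (a (\<epsilon> * t) * deriv V (x t) * v t) \<le> norm (C * ((Q x t + (v t)^2) / 2))"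
        using C(1) q by simp
    qed
  qed
  show ?thesis unfolding G_def[abs_def] using i1 i2 by simp
qed

lemma second_order:
  assumes xW: "x \<in> W_set" and K: "1 \<le> K" "\<forall>t. \<bar>x t\<bar> \<le> K"
    and L: "0 \<le> L" "\<forall>y\<in>{-(K+4)..K+4}. \<forall>z\<in>{-(K+4)..K+4}. \<bar>deriv V z - deriv V y\<bar> \<le> L * \<bar>z - y\<bar>
      \<and> \<bar>V z - V y - deriv V y * (z - y)\<bar> \<le> L * (z - y)^2"
    and A: "0 \<le> A" "\<forall>t. \<bar>a t\<bar> \<le> A"
    and v: "v \<in> H1" "H1_norm v = 1"
    and tau: "0 \<le> \<tau>" "\<tau> \<le> 1"
  shows "J_eps V a \<epsilon> (\<lambda>t. x t - \<tau> * v t) \<le> J_eps V a \<epsilon> x - \<tau> * dJ_eps V a \<epsilon> x v + \<tau>^2 * (1/2 + A * L)"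
proof -
  define y where "y = (\<lambda>t. x t - \<tau> * v t)"
  have yW: "y \<in> W_set" unfolding y_def by (rule comb_W(1)[OF xW v(1)])
  have ae: "AE t in lborel. wderiv y t = wderiv x t - \<tau> * wderiv v t"
    unfolding y_def by (rule comb_W(2)[OF xW v(1)])
  define H where "H = (\<lambda>t. Fx x t - \<tau> * G x v t + \<tau>^2 * (1/2 * (wderiv v t)^2 + (A * L) * (v t)^2))"
  have Hi: "integrable lborel H"
    unfolding H_def using F_int[OF xW] G_int[OF xW v(1)] H1_int[OF v(1)] by simp
  have pt: "Fx y t \<le> H t" if wt: "wderiv y t = wderiv x t - \<tau> * wderiv v t" for t
  proof -
    have vb: "\<bar>v t\<bar> \<le> 4" by (rule H1_sup[OF v])
    have tv: "\<bar>\<tau> * v t\<bar> \<le> 4"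
    proof -
      have "\<bar>\<tau> * v t\<bar> = \<tau> * \<bar>v t\<bar>" using tau by (simp add: abs_mult)
      also have "\<dots> \<le> 1 * 4" using tau vb by (intro mult_mono) auto
      finally show ?thesis by simp
    qed
    have xK: "x t \<in> {-(K+4)..K+4}" using K(2)[rule_format, of t] by auto
    have yK: "x t - \<tau> * v t \<in> {-(K+4)..K+4}" using K(2)[rule_format, of t] tv by auto
    have tay: "V (x t - \<tau> * v t) \<le> V (x t) - \<tau> * (deriv V (x t) * v t) + L * (\<tau> * v t)^2"
    proof -
      have "\<bar>V (x t - \<tau> * v t) - V (x t) - deriv V (x t) * ((x t - \<tau> * v t) - x t)\<bar> \<le> L * ((x t - \<tau> * v t) - x t)^2"
        using L(2)[rule_format, OF xK yK] by blast
      then show ?thesis by (simp add: algebra_simps power2_eq_square)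
    qed
    have a0: "0 \<le> a (\<epsilon> * t)" "a (\<epsilon> * t) \<le> A" using a_pos A(2) by (auto simp: less_imp_le abs_le_iff)
    have "a (\<epsilon> * t) * V (x t - \<tau> * v t) \<le> a (\<epsilon> * t) * (V (x t) - \<tau> * (deriv V (x t) * v t) + L * (\<tau> * v t)^2)"
      using tay a0 by (intro mult_left_mono) auto
    also have "\<dots> \<le> a (\<epsilon> * t) * V (x t) - \<tau> * (a (\<epsilon> * t) * deriv V (x t) * v t) + A * L * (\<tau> * v t)^2"
    proof -
      have "a (\<epsilon> * t) * (L * (\<tau> * v t)^2) \<le> A * (L * (\<tau> * v t)^2)"
        using a0 L(1) by (intro mult_right_mono) auto
      then show ?thesis by (simp add: algebra_simps)
    qed
    finally have aV: "a (\<epsilon> * t) * V (y t) \<le> a (\<epsilon> * t) * V (x t) - \<tau> * (a (\<epsilon> * t) * deriv V (x t) * v t) + A * L * (\<tau> * v t)^2"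
      unfolding y_def .
    have "Fx y t = 1/2 * (wderiv x t - \<tau> * wderiv v t)^2 + a (\<epsilon> * t) * V (y t)"
      unfolding Fx_def wt ..
    also have "\<dots> \<le> 1/2 * (wderiv x t - \<tau> * wderiv v t)^2 + (a (\<epsilon> * t) * V (x t) - \<tau> * (a (\<epsilon> * t) * deriv V (x t) * v t) + A * L * (\<tau> * v t)^2)"
      using aV by simp
    also have "\<dots> = H t"
      unfolding H_def Fx_def G_def by (simp add: power2_eq_square algebra_simps)
    finally show ?thesis .
  qed
  have "J_eps V a \<epsilon> y = (LINT t|lborel. Fx y t)" by (rule J_eq)
  also have "\<dots> \<le> (LINT t|lborel. H t)"
  proof (rule integral_mono_AE[OF F_int[OF yW] Hi])
    show "AE t in lborel. Fx y t \<le> H t" using ae by eventually_elim (rule pt)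
  qed
  also have "(LINT t|lborel. H t) = (LINT t|lborel. Fx x t) - \<tau> * (LINT t|lborel. G x v t)
      + \<tau>^2 * (1/2 * (LINT t|lborel. (wderiv v t)^2) + (A * L) * (LINT t|lborel. (v t)^2))"
    unfolding H_def using F_int[OF xW] G_int[OF xW v(1)] H1_int[OF v(1)] by simp
  also have "\<dots> \<le> (LINT t|lborel. Fx x t) - \<tau> * (LINT t|lborel. G x v t) + \<tau>^2 * (1/2 + A * L)"
  proof -
    have "1/2 * (LINT t|lborel. (wderiv v t)^2) + (A * L) * (LINT t|lborel. (v t)^2) \<le> 1/2 * 1 + (A * L) * 1"
      using H1_unit[OF v] A(1) L(1) by (intro add_mono mult_left_mono) auto
    then show ?thesis by (simp add: mult_left_mono)
  qed
  finally show ?thesis unfolding y_def J_eq dJ_eq .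
qed

end




lemma lin_aux:
  fixes p q d c m k b :: real
  shows "d \<le> (2 * c + 1) / 2 \<Longrightarrow> p - q \<le> d \<Longrightarrow> b \<le> m \<Longrightarrow> c \<le> k \<Longrightarrow> m + k + 1 < p \<Longrightarrow> b \<le> q"
  by (simp add: field_simps)

context ctx begin

lemma wd_sq_le_J:
  assumes xW: "x \<in> W_set"
  shows "(LINT t|lborel. (wderiv x t)^2) \<le> 2 * J_eps V a \<epsilon> x"
proof -
  have "(LINT t|lborel. 1/2 * (wderiv x t)^2) \<le> (LINT t|lborel. Fx x t)"
  proof (rule integral_mono)
    show "integrable lborel (\<lambda>t. 1/2 * (wderiv x t)^2)" using wd_sq_int[OF xW] by simp
    show "integrable lborel (Fx x)" by (rule F_int[OF xW])
    show "1/2 * (wderiv x t)^2 \<le> Fx x t" for t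
      unfolding Fx_def using a_pos[of "\<epsilon> * t"] V_nonneg by (simp add: less_imp_le)
  qed
  then show ?thesis unfolding J_eq by simp
qed

lemma sublevel_bound:
  "\<exists>R. \<forall>x\<in>W_set. J_eps V a \<epsilon> x \<le> C0 \<longrightarrow> (\<forall>s. \<bar>x s\<bar> \<le> R)"
proof -
  have "eventually (\<lambda>y. (C0 + 1) / a 0 \<le> V y) at_infinity"
    using V_coercive unfolding filterlim_at_top by blast
  then obtain b where b: "\<And>y. b \<le> norm y \<Longrightarrow> (C0 + 1) / a 0 \<le> V y"
    unfolding eventually_at_infinity by blast
  define R where "R = max b 0 + \<bar>C0\<bar> + 1"
  have "\<bar>x s\<bar> \<le> R" if xW: "x \<in> W_set" and J: "J_eps V a \<epsilon> x \<le> C0" for x s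
  proof (rule ccontr)
    assume "\<not> \<bar>x s\<bar> \<le> R"
    then have big: "\<bar>x s\<bar> > R" by simp
    have gx: "is_wderiv x (wderiv x)" by (rule W_wd[OF xW])
    have w2: "(LINT t|lborel. (wderiv x t)^2) \<le> 2 * C0" using wd_sq_le_J[OF xW] J by simp
    have lowV: "C0 + 1 \<le> a (\<epsilon> * r) * V (x r)" if r: "r \<in> {s - 1<..<s}" for r
    proof -
      have "\<bar>x s - x r\<bar> \<le> ((LINT t:{r<..<s}|lborel. (wderiv x t)^2) + (s - r)) / 2"
        using r by (intro diff_bound[OF gx]) auto
      also have "\<dots> \<le> (2 * C0 + 1) / 2"
      proof -
        have "(LINT t:{r<..<s}|lborel. (wderiv x t)^2) \<le> (LINT t|lborel. (wderiv x t)^2)"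
          by (rule box_le_total(2)[OF wd_sq_int[OF xW]]) simp
        then show ?thesis using w2 r by simp
      qed
      finally have "\<bar>x s - x r\<bar> \<le> (2 * C0 + 1) / 2" .
      moreover have "\<bar>x s\<bar> - \<bar>x r\<bar> \<le> \<bar>x s - x r\<bar>" by (rule abs_triangle_ineq2)
      moreover have "b \<le> max b 0" "C0 \<le> \<bar>C0\<bar>" by auto
      ultimately have "b \<le> \<bar>x r\<bar>" using big lin_aux[where p="\<bar>x s\<bar>" and q="\<bar>x r\<bar>" and d="\<bar>x s - x r\<bar>" and c=C0 and m="max b 0" and k="\<bar>C0\<bar>" and b=b] unfolding R_def by blast
      then have "b \<le> norm (x r)" by simp
      then have vb: "(C0 + 1) / a 0 \<le> V (x r)" by (rule b)
      have "C0 + 1 = a 0 * ((C0 + 1) / a 0)" using a0_pos by simp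
      also have "\<dots> \<le> a 0 * V (x r)"
        using vb a0_pos by (intro mult_left_mono) auto
      also have "\<dots> \<le> a (\<epsilon> * r) * V (x r)"
        using a_min[of "\<epsilon> * r"] V_nonneg by (intro mult_right_mono) auto
      finally show ?thesis .
    qed
    have aVi: "integrable lborel (\<lambda>t. a (\<epsilon> * t) * V (x t))" by (rule aV_int[OF xW])
    have aVn: "\<And>t. 0 \<le> a (\<epsilon> * t) * V (x t)" using a_pos V_nonneg by (simp add: less_imp_le)
    have s1: "set_integrable lborel {s - 1<..<s} (\<lambda>t. C0 + 1)"
    proof -
      have "integrable lborel (indicat_real {s - 1<..<s})"
        by (rule integrable_real_indicator) simp_all
      then show ?thesis unfolding set_integrable_def by simp
    qed
    have "C0 + 1 = (LINT t:{s - 1<..<s}|lborel. C0 + 1)"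
      by (simp add: set_lebesgue_integral_def)
    also have "\<dots> \<le> (LINT t:{s - 1<..<s}|lborel. a (\<epsilon> * t) * V (x t))"
      by (rule set_integral_mono[OF s1 box_le_total(1)[OF aVi aVn] lowV])
    also have "\<dots> \<le> (LINT t|lborel. a (\<epsilon> * t) * V (x t))"
      by (rule box_le_total(2)[OF aVi aVn])
    also have "\<dots> \<le> (LINT t|lborel. Fx x t)"
      by (rule integral_mono[OF aVi F_int[OF xW]]) (simp add: Fx_def)
    also have "\<dots> \<le> C0" using J unfolding J_eq .
    finally show False by simp
  qed
  then show ?thesis by blast
qed

end




lemma prim_wd:
  fixes h :: "real \<Rightarrow> real"
  assumes hl: "\<And>p q. set_integrable lborel {p..q} h" "\<And>p q. set_integrable lborel {p..q} (\<lambda>t. (h t)^2)"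
  shows "is_wderiv (\<lambda>t. LBINT u=0..t. h u) h"
  unfolding is_wderiv_def
proof (intro conjI allI)
  fix p q show "set_integrable lborel {p..q} h" "set_integrable lborel {p..q} (\<lambda>t. (h t)^2)" using hl by auto
next
  fix s t :: real
  have ii: "interval_lebesgue_integrable lborel (ereal p) (ereal q) h" for p q
  proof -
    have "set_integrable lborel {min p q<..<max p q} h"
      by (rule set_integrable_subset[OF hl(1)[of "min p q" "max p q"]]) auto
    then show ?thesis unfolding interval_lebesgue_integrable_def by (cases "p \<le> q") (auto simp: min_def max_def)
  qed
  have "(LBINT u=ereal 0..ereal s. h u) + (LBINT u=ereal s..ereal t. h u) = (LBINT u=ereal 0..ereal t. h u)"
    by (rule interval_integral_sum) (use ii[of "min 0 (min s t)" "max 0 (max s t)"] in \<open>simp add: min_def max_def split: if_splits\<close>)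
  then show "(LBINT u=0..t. h u) - (LBINT u=0..s. h u) = (LBINT u=s..t. h u)"
    by (simp add: zero_ereal_def algebra_simps)
qed

lemma ind_loc:
  fixes p q :: real and S :: "real set"
  assumes "S \<in> sets borel"
  shows "set_integrable lborel {p..q} (indicat_real S)" "set_integrable lborel {p..q} (\<lambda>t. (indicat_real S t)^2)"
proof -
  have "integrable lborel (indicat_real ({p..q} \<inter> S))"
  proof (rule integrable_real_indicator)
    show "{p..q} \<inter> S \<in> sets lborel" by (intro sets.Int borel_closed closed_atLeastAtMost) (simp_all add: assms)
    have "emeasure lborel ({p..q} \<inter> S) \<le> emeasure lborel {p..q}"
      by (rule emeasure_mono) auto
    also have "\<dots> < top" by (simp add: emeasure_lborel_Icc_eq)
    finally show "emeasure lborel ({p..q} \<inter> S) < \<infinity>" by simp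
  qed
  moreover have "(\<lambda>t. indicat_real {p..q} t *\<^sub>R indicat_real S t) = indicat_real ({p..q} \<inter> S)"
    by (rule ext) (simp add: indicator_def)
  moreover have "(\<lambda>t. indicat_real {p..q} t *\<^sub>R (indicat_real S t)^2) = indicat_real ({p..q} \<inter> S)"
    by (rule ext) (simp add: indicator_def)
  ultimately show "set_integrable lborel {p..q} (indicat_real S)" "set_integrable lborel {p..q} (\<lambda>t. (indicat_real S t)^2)"
    unfolding set_integrable_def by simp_all
qed

lemma setint_indicator:
  fixes A S :: "real set"
  assumes "A \<in> sets borel" "S \<in> sets borel"
  shows "(LINT x:A|lborel. indicat_real S x) = measure lborel (A \<inter> S)"
proof -
  have "(\<lambda>x. indicat_real A x *\<^sub>R indicat_real S x) = indicat_real (A \<inter> S)"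
    by (rule ext) (simp add: indicator_def)
  then show ?thesis unfolding set_lebesgue_integral_def by simp
qed

lemma cs_set:
  fixes f :: "real \<Rightarrow> real"
  assumes c: "continuous_on UNIV f" and S: "S \<in> sets borel" and z: "\<And>t. t \<notin> {p..q} \<Longrightarrow> f t = 0"
  shows "set_integrable lborel S (\<lambda>t. (f t)^2)"
proof -
  have "compact (f ` {p..q})" by (intro compact_continuous_image continuous_on_subset[OF c]) auto
  then obtain M where M: "\<And>y. y \<in> f ` {p..q} \<Longrightarrow> norm y \<le> M" using compact_imp_bounded bounded_iff by metis
  have fm: "f \<in> borel_measurable borel" by (rule borel_measurable_continuous_onI[OF c])
  have "integrable lborel (\<lambda>t. indicator S t * (f t)^2)"
  proof (rule Bochner_Integration.integrable_bound)
    have "integrable lborel (indicat_real {p..q})"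
      by (rule integrable_real_indicator) (simp_all add: emeasure_lborel_Icc_eq)
    then show "integrable lborel (\<lambda>t. M^2 * indicat_real {p..q} t)" by simp
    show "(\<lambda>t. indicator S t * (f t)^2) \<in> borel_measurable lborel" using fm S by measurable
    show "AE t in lborel. norm (indicator S t * (f t)^2) \<le> norm (M^2 * indicat_real {p..q} t)"
    proof (rule AE_I2)
      fix t
      show "norm (indicator S t * (f t)^2) \<le> norm (M^2 * indicat_real {p..q} t)"
      proof (cases "t \<in> {p..q}")
        case True
        then have "\<bar>f t\<bar> \<le> M" using M[of "f t"] by auto
        then have "\<bar>f t\<bar>^2 \<le> M^2" by (intro power_mono) auto
        then have "(f t)^2 \<le> M^2" by simp
        then show ?thesis using True by (auto simp: indicator_def)
      next
        case False then show ?thesis using z by simp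
      qed
    qed
  qed
  then show ?thesis unfolding set_integrable_def by simp
qed

lemma is_wderiv_scale:
  assumes "is_wderiv v h"
  shows "is_wderiv (\<lambda>t. c * v t) (\<lambda>t. c * h t)"
proof -
  have z: "is_wderiv (\<lambda>t. 0) (\<lambda>t. 0)" unfolding is_wderiv_def by (simp add: set_integrable_def)
  show ?thesis using is_wderiv_comb[OF z assms, of "-c"] by simp
qed




lemma cs_set2:
  fixes f :: "real \<Rightarrow> real"
  assumes c: "continuous_on UNIV f" and S: "S \<in> sets borel" and z: "\<And>t. t \<in> S \<Longrightarrow> t \<notin> {p..q} \<Longrightarrow> f t = 0"
  shows "set_integrable lborel S (\<lambda>t. (f t)^2)"
proof -
  have "compact (f ` {p..q})" by (intro compact_continuous_image continuous_on_subset[OF c]) auto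
  then obtain M where M: "\<And>y. y \<in> f ` {p..q} \<Longrightarrow> norm y \<le> M" using compact_imp_bounded bounded_iff by metis
  have fm: "f \<in> borel_measurable borel" by (rule borel_measurable_continuous_onI[OF c])
  have "integrable lborel (\<lambda>t. indicator S t * (f t)^2)"
  proof (rule Bochner_Integration.integrable_bound)
    have "integrable lborel (indicat_real {p..q})"
      by (rule integrable_real_indicator) (simp_all add: emeasure_lborel_Icc_eq)
    then show "integrable lborel (\<lambda>t. M^2 * indicat_real {p..q} t)" by simp
    show "(\<lambda>t. indicator S t * (f t)^2) \<in> borel_measurable lborel" using fm S by measurable
    show "AE t in lborel. norm (indicator S t * (f t)^2) \<le> norm (M^2 * indicat_real {p..q} t)"
    proof (rule AE_I2)
      fix t
      show "norm (indicator S t * (f t)^2) \<le> norm (M^2 * indicat_real {p..q} t)"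
      proof (cases "t \<in> {p..q}")
        case True
        then have "\<bar>f t\<bar> \<le> M" using M[of "f t"] by auto
        then have "\<bar>f t\<bar>^2 \<le> M^2" by (intro power_mono) auto
        then have "(f t)^2 \<le> M^2" by simp
        then show ?thesis using True by (auto simp: indicator_def)
      next
        case False then show ?thesis using z[of t] by (cases "t \<in> S") auto
      qed
    qed
  qed
  then show ?thesis unfolding set_integrable_def by simp
qed

lemma lbint_pos:
  fixes h :: "real \<Rightarrow> real"
  assumes "0 \<le> t"
  shows "(LBINT u=0..t. h u) = (LINT u:{0<..<t}|lborel. h u)"
  using assms by (simp add: interval_lebesgue_integral_def zero_ereal_def)

lemma lbint_neg:
  fixes h :: "real \<Rightarrow> real"
  assumes "t \<le> 0"
  shows "(LBINT u=0..t. h u) = - (LINT u:{t<..<0}|lborel. h u)"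
proof (cases "t = 0")
  case True
  have "(LBINT u=(0::ereal)..ereal 0. h u) = 0" by (simp add: zero_ereal_def)
  then show ?thesis using True by (simp add: set_lebesgue_integral_def)
next
  case False
  then show ?thesis using assms by (auto simp: interval_lebesgue_integral_def zero_ereal_def)
qed

definition x0 :: "real \<Rightarrow> real" where "x0 = (\<lambda>t. LBINT u=0..t. indicat_real {-1..1} u)"

lemma x0_wd: "is_wderiv x0 (indicat_real {-1..1})"
  unfolding x0_def by (rule prim_wd) (auto intro: ind_loc)

lemma x0_right: "1 \<le> t \<Longrightarrow> x0 t = 1"
proof -
  assume t: "1 \<le> t"
  have "x0 t = measure lborel ({0<..<t} \<inter> {-1..1})"
    unfolding x0_def using t by (simp add: lbint_pos setint_indicator)
  also have "\<dots> = 1"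
  proof (cases "t = 1")
    case True
    then have "{0<..<t} \<inter> {-1..1} = {0<..<(1::real)}" by auto
    then show ?thesis by simp
  next
    case False
    then have "{0<..<t} \<inter> {-1..1} = {0<..(1::real)}" using t by auto
    then show ?thesis by simp
  qed
  finally show ?thesis .
qed

lemma x0_left: "t \<le> -1 \<Longrightarrow> x0 t = -1"
proof -
  assume t: "t \<le> -1"
  have "x0 t = - measure lborel ({t<..<0} \<inter> {-1..1})"
    unfolding x0_def using t by (simp add: lbint_neg setint_indicator)
  also have "\<dots> = -1"
  proof (cases "t = -1")
    case True
    then have "{t<..<0} \<inter> {-1..1} = {-1<..<(0::real)}" by auto
    then show ?thesis by simp
  next
    case False
    then have "{t<..<0} \<inter> {-1..1} = {-1..<(0::real)}" using t by auto
    then show ?thesis by simp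
  qed
  finally show ?thesis .
qed

lemma wd_sq_from_ae:
  assumes y: "is_wderiv y g" and h: "is_wderiv y k" and S: "S \<in> sets borel"
    and hk: "set_integrable lborel S (\<lambda>t. (k t)^2)"
  shows "set_integrable lborel S (\<lambda>t. (g t)^2)"
proof -
  have ae: "AE t in lborel. g t = k t" by (rule wd_unique[OF y h])
  have gm: "g \<in> borel_measurable borel" by (rule meas_of_wd[OF y])
  have km: "k \<in> borel_measurable borel" by (rule meas_of_wd[OF h])
  have "AE t in lborel. indicator S t * (k t)^2 = indicator S t * (g t)^2"
    using ae by eventually_elim simp
  then show ?thesis using hk unfolding set_integrable_def
    using integrable_cong_AE[of "\<lambda>t. indicator S t * (k t)^2" lborel "\<lambda>t. indicator S t * (g t)^2"] S gm km by simp
qed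

lemma x0_W: "x0 \<in> W_set"
proof -
  have H: "x0 \<in> H1loc" using x0_wd unfolding H1loc_def by blast
  have c: "continuous_on UNIV x0" by (rule cont_of_wd[OF x0_wd])
  have i1: "set_integrable lborel {..0} (\<lambda>t. (x0 t + 1)^2)"
    by (rule cs_set2[of _ _ "-1" 1]) (use c x0_left in \<open>auto intro!: continuous_intros\<close>)
  have i2: "set_integrable lborel {0..} (\<lambda>t. (x0 t - 1)^2)"
    by (rule cs_set2[of _ _ "-1" 1]) (use c x0_right in \<open>auto intro!: continuous_intros\<close>)
  have hsq: "set_integrable lborel S (\<lambda>t. (indicat_real {-1..1} t)^2)" if "S \<in> sets borel" for S :: "real set"
  proof -
    have "integrable lborel (\<lambda>t. (indicat_real {-1..1::real} t)^2)"
    proof (rule Bochner_Integration.integrable_bound)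
      show "integrable lborel (indicat_real {-1..1::real})"
        by (rule integrable_real_indicator) (simp_all add: emeasure_lborel_Icc_eq)
      show "(\<lambda>t. (indicat_real {-1..1::real} t)^2) \<in> borel_measurable lborel" by measurable
      show "AE t in lborel. norm ((indicat_real {-1..1::real} t)^2) \<le> norm (indicat_real {-1..1::real} t)"
        by (rule AE_I2) (simp add: indicator_def)
    qed
    then show ?thesis by (rule setint_UNIV[OF that])
  qed
  have w: "set_integrable lborel S (\<lambda>t. (wderiv x0 t)^2)" if "S \<in> sets borel" for S :: "real set"
    by (rule wd_sq_from_ae[OF H1loc_wd[OF H] x0_wd that hsq[OF that]])
  show ?thesis unfolding W_set_def using H i1 i2 w[of "{..0}"] w[of "{0..}"] by auto
qed




definition h1 :: "real \<Rightarrow> real" where "h1 = (\<lambda>t. indicat_real {0..1} t - indicat_real {1<..2} t)"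
definition v1 :: "real \<Rightarrow> real" where "v1 = (\<lambda>t. LBINT u=0..t. h1 u)"

lemma h1_sq: "(\<lambda>t. (h1 t)^2) = (\<lambda>t. (indicat_real {0..2::real} t)^2)"
  by (rule ext) (auto simp: h1_def indicator_def)

lemma h1_loc: "set_integrable lborel {p..q} h1" "set_integrable lborel {p..q} (\<lambda>t. (h1 t)^2)"
proof -
  show "set_integrable lborel {p..q} h1"
    unfolding h1_def by (intro set_integral_diff(1) ind_loc(1)) auto
  show "set_integrable lborel {p..q} (\<lambda>t. (h1 t)^2)"
    by (subst h1_sq) (rule ind_loc(2), auto)
qed

lemma v1_wd: "is_wderiv v1 h1"
  unfolding v1_def by (rule prim_wd[OF h1_loc])

lemma h1_box:
  fixes p q :: real
  assumes "p \<le> q"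
  shows "(LINT u:{p<..<q}|lborel. h1 u) = measure lborel ({p<..<q} \<inter> {0..1}) - measure lborel ({p<..<q} \<inter> {1<..2})"
proof -
  have a: "set_integrable lborel {p<..<q} (indicat_real {0..1::real})"
    by (rule set_integrable_subset[OF ind_loc(1)[of "{0..1}" p q]]) auto
  have b: "set_integrable lborel {p<..<q} (indicat_real {1<..2::real})"
    by (rule set_integrable_subset[OF ind_loc(1)[of "{1<..2}" p q]]) auto
  show ?thesis unfolding h1_def
    using set_integral_diff(2)[OF a b] by (simp add: setint_indicator)
qed

lemma v1_zero: "t \<notin> {0..2} \<Longrightarrow> v1 t = 0"
proof -
  assume t: "t \<notin> {0..2}"
  show "v1 t = 0"
  proof (cases "t < 0")
    case True
    have e1: "{t<..<0} \<inter> {0..1} = ({}::real set)" "{t<..<0} \<inter> {1<..2} = ({}::real set)" by auto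
    show ?thesis unfolding v1_def using True
      by (simp add: lbint_neg h1_box e1)
  next
    case False
    then have t2: "2 < t" using t by auto
    have e1: "{0<..<t} \<inter> {0..1} = {0<..(1::real)}" "{0<..<t} \<inter> {1<..2} = {1<..(2::real)}" using t2 by auto
    show ?thesis unfolding v1_def using t2
      by (simp add: lbint_pos h1_box e1)
  qed
qed

lemma ind02_int: "integrable lborel (\<lambda>t. (indicat_real {0..2::real} t)^2)"
proof (rule Bochner_Integration.integrable_bound)
  show "integrable lborel (indicat_real {0..2::real})"
    by (rule integrable_real_indicator) (simp_all add: emeasure_lborel_Icc_eq)
  show "(\<lambda>t. (indicat_real {0..2::real} t)^2) \<in> borel_measurable lborel" by measurable
  show "AE t in lborel. norm ((indicat_real {0..2::real} t)^2) \<le> norm (indicat_real {0..2::real} t)"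
    by (rule AE_I2) (simp add: indicator_def)
qed

lemma h1_sq_int: "integrable lborel (\<lambda>t. (h1 t)^2)"
  using ind02_int by (subst h1_sq)

lemma h1_sq_integral: "(LINT t|lborel. (h1 t)^2) = 2"
proof -
  have "(\<lambda>t. (h1 t)^2) = indicat_real {0..2::real}" by (rule ext) (auto simp: h1_def indicator_def)
  then show ?thesis by simp
qed

lemma v1_H1: "v1 \<in> H1"
proof -
  have H: "v1 \<in> H1loc" using v1_wd unfolding H1loc_def by blast
  have c: "continuous_on UNIV v1" by (rule cont_of_wd[OF v1_wd])
  have i1: "set_integrable lborel UNIV (\<lambda>t. (v1 t)^2)"
    by (rule cs_set2[of _ _ 0 2]) (use c v1_zero in auto)
  have i2: "set_integrable lborel UNIV (\<lambda>t. (wderiv v1 t)^2)"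
    by (rule wd_sq_from_ae[OF H1loc_wd[OF H] v1_wd]) (use h1_sq_int in \<open>auto simp: set_integrable_def\<close>)
  show ?thesis unfolding H1_def using H i1 i2 by (simp add: set_integrable_def)
qed

lemma unit_exists: "\<exists>v. v \<in> H1 \<and> H1_norm v = 1"
proof -
  have H: "v1 \<in> H1loc" using v1_H1 unfolding H1_def by blast
  have ae1: "AE t in lborel. wderiv v1 t = h1 t" by (rule wd_unique[OF H1loc_wd[OF H] v1_wd])
  define I where "I = (LINT t|lborel. (v1 t)^2 + (wderiv v1 t)^2)"
  have iv: "integrable lborel (\<lambda>t. (v1 t)^2)" "integrable lborel (\<lambda>t. (wderiv v1 t)^2)"
    using v1_H1 unfolding H1_def by auto
  have w2: "(LINT t|lborel. (wderiv v1 t)^2) = 2"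
  proof -
    have "(LINT t|lborel. (wderiv v1 t)^2) = (LINT t|lborel. (h1 t)^2)"
      by (rule integral_cong_AE) (use ae1 meas_of_wd[OF H1loc_wd[OF H]] meas_of_wd[OF v1_wd] in \<open>auto elim!: eventually_mono\<close>)
    then show ?thesis using h1_sq_integral by simp
  qed
  have Ipos: "0 < I"
  proof -
    have n: "0 \<le> (LINT t|lborel. (v1 t)^2)" by simp
    have e: "I = (LINT t|lborel. (v1 t)^2) + 2" unfolding I_def using iv w2 by simp
    show ?thesis using n e by linarith
  qed
  define c where "c = 1 / sqrt I"
  define v where "v = (\<lambda>t. c * v1 t)"
  have gv: "is_wderiv v (\<lambda>t. c * wderiv v1 t)" unfolding v_def by (rule is_wderiv_scale[OF H1loc_wd[OF H]])
  have vH: "v \<in> H1loc" using gv unfolding H1loc_def by blast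
  have ae: "AE t in lborel. wderiv v t = c * wderiv v1 t" by (rule wd_unique[OF H1loc_wd[OF vH] gv])
  have m1: "wderiv v \<in> borel_measurable borel" by (rule meas_of_wd[OF H1loc_wd[OF vH]])
  have m2: "wderiv v1 \<in> borel_measurable borel" by (rule meas_of_wd[OF H1loc_wd[OF H]])
  have vm: "v1 \<in> borel_measurable borel" by (rule borel_measurable_continuous_onI[OF cont_of_wd[OF v1_wd]])
  have ae2: "AE t in lborel. (v t)^2 + (wderiv v t)^2 = c^2 * ((v1 t)^2 + (wderiv v1 t)^2)"
    using ae by eventually_elim (simp add: v_def power_mult_distrib algebra_simps)
  have ae3: "AE t in lborel. (wderiv v t)^2 = c^2 * (wderiv v1 t)^2"
    using ae by eventually_elim (simp add: power_mult_distrib)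
  have i1: "integrable lborel (\<lambda>t. (v t)^2)" unfolding v_def using iv(1) by (simp add: power_mult_distrib)
  have i2: "integrable lborel (\<lambda>t. (wderiv v t)^2)"
  proof -
    have "integrable lborel (\<lambda>t. c^2 * (wderiv v1 t)^2)" using iv(2) by simp
    then show ?thesis
      using integrable_cong_AE[of "\<lambda>t. (wderiv v t)^2" lborel "\<lambda>t. c^2 * (wderiv v1 t)^2"] ae3 m1 m2 by simp
  qed
  have vH1: "v \<in> H1" unfolding H1_def using vH i1 i2 by simp
  have "(LINT t|lborel. (v t)^2 + (wderiv v t)^2) = (LINT t|lborel. c^2 * ((v1 t)^2 + (wderiv v1 t)^2))"
    by (rule integral_cong_AE) (use ae2 vm m1 m2 in \<open>auto simp: v_def\<close>)
  also have "\<dots> = c^2 * I" unfolding I_def by simp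
  also have "\<dots> = 1" unfolding c_def using Ipos by (simp add: power_divide)
  finally have "H1_norm v = 1" unfolding H1_norm_def by simp
  then show ?thesis using vH1 by blast
qed




lemma neg_H1:
  assumes v: "v \<in> H1" and n: "H1_norm v = 1"
  shows "(\<lambda>t. - v t) \<in> H1" "H1_norm (\<lambda>t. - v t) = 1"
    "AE t in lborel. wderiv (\<lambda>t. - v t) t = - wderiv v t"
proof -
  have gv: "is_wderiv v (wderiv v)" by (rule H1_wd[OF v])
  have g: "is_wderiv (\<lambda>t. - v t) (\<lambda>t. - wderiv v t)" using is_wderiv_scale[OF gv, of "-1"] by simp
  have H: "(\<lambda>t. - v t) \<in> H1loc" using g unfolding H1loc_def by blast
  show ae: "AE t in lborel. wderiv (\<lambda>t. - v t) t = - wderiv v t" by (rule wd_unique[OF H1loc_wd[OF H] g])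
  have m1: "wderiv (\<lambda>t. - v t) \<in> borel_measurable borel" by (rule meas_of_wd[OF H1loc_wd[OF H]])
  have m2: "wderiv v \<in> borel_measurable borel" by (rule meas_of_wd[OF gv])
  have vm: "v \<in> borel_measurable borel" by (rule borel_measurable_continuous_onI[OF cont_of_wd[OF gv]])
  have ae2: "AE t in lborel. (wderiv (\<lambda>t. - v t) t)^2 = (wderiv v t)^2" using ae by eventually_elim simp
  have i2: "integrable lborel (\<lambda>t. (wderiv (\<lambda>t. - v t) t)^2)"
    using integrable_cong_AE[of "\<lambda>t. (wderiv (\<lambda>t. - v t) t)^2" lborel "\<lambda>t. (wderiv v t)^2"] ae2 m1 m2
      H1_int(2)[OF v] by simp
  show "(\<lambda>t. - v t) \<in> H1" unfolding H1_def using H i2 H1_int(1)[OF v] by simp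
  have "(LINT t|lborel. (- v t)^2 + (wderiv (\<lambda>t. - v t) t)^2) = (LINT t|lborel. (v t)^2 + (wderiv v t)^2)"
    by (rule integral_cong_AE) (use ae2 vm m1 m2 in auto)
  then show "H1_norm (\<lambda>t. - v t) = 1" using n unfolding H1_norm_def by simp
qed

context ctx begin

lemma dJ_neg:
  assumes v: "v \<in> H1" "H1_norm v = 1" and xW: "x \<in> W_set"
  shows "dJ_eps V a \<epsilon> x (\<lambda>t. - v t) = - dJ_eps V a \<epsilon> x v"
proof -
  have gv: "is_wderiv v (wderiv v)" by (rule H1_wd[OF v(1)])
  have H: "(\<lambda>t. - v t) \<in> H1loc" using neg_H1(1)[OF v] unfolding H1_def by blast
  have m1[measurable]: "wderiv (\<lambda>t. - v t) \<in> borel_measurable borel" by (rule meas_of_wd[OF H1loc_wd[OF H]])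
  have gx: "is_wderiv x (wderiv x)" by (rule W_wd[OF xW])
  have m2[measurable]: "wderiv x \<in> borel_measurable borel" by (rule meas_of_wd[OF gx])
  have m3[measurable]: "wderiv v \<in> borel_measurable borel" by (rule meas_of_wd[OF gv])
  have m4[measurable]: "v \<in> borel_measurable borel" by (rule borel_measurable_continuous_onI[OF cont_of_wd[OF gv]])
  have m5[measurable]: "(\<lambda>t. a (\<epsilon> * t) * deriv V (x t)) \<in> borel_measurable borel"
    by (rule borel_measurable_continuous_onI[OF cont_aV'[OF cont_of_wd[OF gx]]])
  have m6[measurable]: "(\<lambda>t. a (\<epsilon> * t) * deriv V (x t) * v t) \<in> borel_measurable borel"
    using m5 m4 by (rule borel_measurable_times)
  have "dJ_eps V a \<epsilon> x (\<lambda>t. - v t) = (LINT t|lborel. - (wderiv x t * wderiv v t + a (\<epsilon> * t) * deriv V (x t) * v t))"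
    unfolding dJ_eps_def
  proof (rule integral_cong_AE)
    show "AE t in lborel. wderiv x t * wderiv (\<lambda>t. - v t) t + a (\<epsilon> * t) * deriv V (x t) * - v t =
        - (wderiv x t * wderiv v t + a (\<epsilon> * t) * deriv V (x t) * v t)"
      using neg_H1(3)[OF v] by eventually_elim simp
  qed measurable
  also have "\<dots> = - dJ_eps V a \<epsilon> x v" unfolding dJ_eps_def by (rule integral_minus)
  finally show ?thesis .
qed

lemma J_nonneg: "0 \<le> J_eps V a \<epsilon> x"
  unfolding J_eq by (rule Bochner_Integration.integral_nonneg) (simp add: F_nonneg)

lemma B_props:
  shows "\<And>x. x \<in> W_set \<Longrightarrow> B_eps V a \<epsilon> \<le> J_eps V a \<epsilon> x"
    "\<And>\<eta>. 0 < \<eta> \<Longrightarrow> \<exists>x\<in>W_set. J_eps V a \<epsilon> x < B_eps V a \<epsilon> + \<eta>"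
proof -
  have bdd: "bdd_below (J_eps V a \<epsilon> ` W_set)" using J_nonneg by (intro bdd_belowI[of _ 0]) auto
  have ne: "J_eps V a \<epsilon> ` W_set \<noteq> {}" using x0_W by blast
  show "\<And>x. x \<in> W_set \<Longrightarrow> B_eps V a \<epsilon> \<le> J_eps V a \<epsilon> x"
    unfolding B_eps_def using bdd by (auto intro: cInf_lower)
  fix \<eta> :: real assume "0 < \<eta>"
  then have "Inf (J_eps V a \<epsilon> ` W_set) < B_eps V a \<epsilon> + \<eta>" unfolding B_eps_def by simp
  then show "\<exists>x\<in>W_set. J_eps V a \<epsilon> x < B_eps V a \<epsilon> + \<eta>"
    using cInf_less_iff[OF ne bdd] by auto
qed

lemma key:
  assumes sig: "0 < \<sigma>"
  shows "\<exists>x\<in>W_set. J_eps V a \<epsilon> x < B_eps V a \<epsilon> + \<sigma> \<and> \<bar>dJ_norm V a \<epsilon> x\<bar> < \<sigma>"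
proof -
  define B where "B = B_eps V a \<epsilon>"
  obtain R where R: "\<forall>x\<in>W_set. J_eps V a \<epsilon> x \<le> B + 1 \<longrightarrow> (\<forall>s. \<bar>x s\<bar> \<le> R)"
    using sublevel_bound by blast
  define K where "K = max R 1"
  obtain L where L: "0 \<le> L" "\<forall>y\<in>{-(K+4)..K+4}. \<forall>z\<in>{-(K+4)..K+4}. \<bar>deriv V z - deriv V y\<bar> \<le> L * \<bar>z - y\<bar>
      \<and> \<bar>V z - V y - deriv V y * (z - y)\<bar> \<le> L * (z - y)^2" using V_local by blast
  obtain A where A: "A > 0" "\<forall>t. \<bar>a t\<bar> \<le> A" using a_bound by blast
  define M where "M = 1/2 + A * L"
  have "0 \<le> A * L" using A L by simp
  then have M: "0 < M" unfolding M_def by linarith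
  define \<tau> where "\<tau> = min 1 (\<sigma> / (4 * M))"
  have tau: "0 < \<tau>" "\<tau> \<le> 1" "\<tau> \<le> \<sigma> / (4 * M)" unfolding \<tau>_def using sig M by auto
  define \<eta> where "\<eta> = min (min \<sigma> 1) (\<tau> * \<sigma> / 4)"
  have eta: "0 < \<eta>" "\<eta> \<le> \<sigma>" "\<eta> \<le> 1" "\<eta> \<le> \<tau> * \<sigma> / 4" unfolding \<eta>_def using sig tau by auto
  obtain x where xW: "x \<in> W_set" and Jx: "J_eps V a \<epsilon> x < B + \<eta>" using B_props(2)[OF eta(1)] unfolding B_def by blast
  have xK: "\<forall>t. \<bar>x t\<bar> \<le> K" using R xW Jx eta unfolding K_def by (meson le_max_iff_disj less_imp_le order_trans add_left_mono)
  have "\<bar>dJ_norm V a \<epsilon> x\<bar> < \<sigma>"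
  proof (rule ccontr)
    assume "\<not> ?thesis"
    then have big: "\<sigma> \<le> \<bar>dJ_norm V a \<epsilon> x\<bar>" by simp
    define D where "D = {dJ_eps V a \<epsilon> x v | v. v \<in> H1 \<and> H1_norm v = 1}"
    have dn: "dJ_norm V a \<epsilon> x = Sup D" unfolding dJ_norm_def D_def ..
    have "\<exists>d\<in>D. \<sigma> / 2 < d"
    proof (cases "bdd_above D")
      case False
      then show ?thesis unfolding bdd_above_def by (meson not_le)
    next
      case True
      obtain v0 where v0: "v0 \<in> H1" "H1_norm v0 = 1" using unit_exists by blast
      have d0: "dJ_eps V a \<epsilon> x v0 \<in> D" "- dJ_eps V a \<epsilon> x v0 \<in> D"
      proof -
        show "dJ_eps V a \<epsilon> x v0 \<in> D" unfolding D_def using v0 by blast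
        show "- dJ_eps V a \<epsilon> x v0 \<in> D" unfolding D_def
          by (intro CollectI exI[of _ "\<lambda>t. - v0 t"]) (simp add: neg_H1(1,2)[OF v0] dJ_neg[OF v0 xW])
      qed
      have "0 \<le> Sup D"
      proof -
        have "dJ_eps V a \<epsilon> x v0 \<le> Sup D" "- dJ_eps V a \<epsilon> x v0 \<le> Sup D"
          using d0 True by (auto intro: cSup_upper)
        then show ?thesis by linarith
      qed
      then have "\<sigma> \<le> Sup D" using big dn by simp
      then have "\<sigma> / 2 < Sup D" using sig by simp
      moreover have "D \<noteq> {}" using d0 by blast
      ultimately show ?thesis using less_cSup_iff[OF _ True] by blast
    qed
    then obtain v where v: "v \<in> H1" "H1_norm v = 1" and dv: "\<sigma> / 2 < dJ_eps V a \<epsilon> x v"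
      unfolding D_def by blast
    have so: "J_eps V a \<epsilon> (\<lambda>t. x t - \<tau> * v t) \<le> J_eps V a \<epsilon> x - \<tau> * dJ_eps V a \<epsilon> x v + \<tau>^2 * (1/2 + A * L)"
      by (rule second_order[OF xW _ xK L _ A(2) v]) (use tau A in \<open>auto simp: K_def\<close>)
    have yW: "(\<lambda>t. x t - \<tau> * v t) \<in> W_set" by (rule comb_W(1)[OF xW v(1)])
    have "B \<le> J_eps V a \<epsilon> (\<lambda>t. x t - \<tau> * v t)" using B_props(1)[OF yW] unfolding B_def .
    moreover have "\<tau> * (\<sigma> / 2) \<le> \<tau> * dJ_eps V a \<epsilon> x v" using dv tau by (intro mult_left_mono) auto
    moreover have "\<tau>^2 * M \<le> \<tau> * (\<sigma> / 4)"
    proof -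
      have "\<tau> * M \<le> \<sigma> / 4" using tau(3) M by (simp add: field_simps)
      then have "\<tau> * (\<tau> * M) \<le> \<tau> * (\<sigma> / 4)" using tau by (intro mult_left_mono) auto
      then show ?thesis by (simp add: power2_eq_square mult.assoc)
    qed
    ultimately show False using so Jx eta(4) unfolding M_def by (simp add: field_simps)
  qed
  moreover have "J_eps V a \<epsilon> x < B_eps V a \<epsilon> + \<sigma>" using Jx eta(2) unfolding B_def by linarith
  ultimately show ?thesis using xW by blast
qed

theorem ctx_main: "\<exists>xs. PS_seq V a \<epsilon> (B_eps V a \<epsilon>) xs"
proof -
  define e where "e = (\<lambda>n::nat. inverse (real (Suc n)))"
  have e0: "0 < e n" for n unfolding e_def by simp
  have "\<forall>n. \<exists>x. x \<in> W_set \<and> J_eps V a \<epsilon> x < B_eps V a \<epsilon> + e n \<and> \<bar>dJ_norm V a \<epsilon> x\<bar> < e n"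
    using key[OF e0] by blast
  then obtain xs where xs: "\<And>n. xs n \<in> W_set" "\<And>n. J_eps V a \<epsilon> (xs n) < B_eps V a \<epsilon> + e n"
    "\<And>n. \<bar>dJ_norm V a \<epsilon> (xs n)\<bar> < e n" by metis
  have el: "e \<longlonglongrightarrow> 0" unfolding e_def by (rule LIMSEQ_inverse_real_of_nat)
  have l1: "(\<lambda>n. J_eps V a \<epsilon> (xs n) - B_eps V a \<epsilon>) \<longlonglongrightarrow> 0"
  proof (rule Lim_null_comparison[OF _ el])
    have "norm (J_eps V a \<epsilon> (xs n) - B_eps V a \<epsilon>) \<le> e n" for n
    proof -
      have "J_eps V a \<epsilon> (xs n) - B_eps V a \<epsilon> \<le> e n" using xs(2)[of n] by simp
      moreover have "0 \<le> J_eps V a \<epsilon> (xs n) - B_eps V a \<epsilon>" using B_props(1)[OF xs(1)[of n]] by simp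
      ultimately show ?thesis by simp
    qed
    then show "\<forall>\<^sub>F n in sequentially. norm (J_eps V a \<epsilon> (xs n) - B_eps V a \<epsilon>) \<le> e n"
      by (intro always_eventually allI)
  qed
  have l2: "(\<lambda>n. dJ_norm V a \<epsilon> (xs n)) \<longlonglongrightarrow> 0"
  proof (rule Lim_null_comparison[OF _ el])
    show "\<forall>\<^sub>F n in sequentially. norm (dJ_norm V a \<epsilon> (xs n)) \<le> e n"
      using xs(3) by (intro always_eventually allI) (simp add: less_imp_le)
  qed
  have "(\<lambda>n. (J_eps V a \<epsilon> (xs n) - B_eps V a \<epsilon>) + B_eps V a \<epsilon>) \<longlonglongrightarrow> 0 + B_eps V a \<epsilon>"
    by (intro tendsto_add l1 tendsto_const)
  then have "(\<lambda>n. J_eps V a \<epsilon> (xs n)) \<longlonglongrightarrow> B_eps V a \<epsilon>" by simp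
  then show ?thesis unfolding PS_seq_def using xs(1) l2 by blast
qed

end



theorem lemma3p3:
  fixes V a :: "real \<Rightarrow> real" and a_inf \<epsilon> :: real
  assumes V_diff: "\<forall>x. V differentiable at x"
    and V'_diff: "\<forall>x. deriv V differentiable at x"
    and V''_cont: "continuous_on UNIV (deriv (deriv V))"
    and V_nonneg: "\<forall>x. V x \<ge> 0"
    and V_zeros: "V (-1) = 0" "V 1 = 0"
    and V_pos_in: "\<forall>x. -1 < x \<and> x < 1 \<longrightarrow> V x > 0"
    and V''_pos: "deriv (deriv V) (-1) > 0" "deriv (deriv V) 1 > 0"
    and V_out: "\<forall>x. \<bar>x\<bar> > 1 \<longrightarrow> V x > 0 \<and> deriv V x * x > 0"
    and V_coercive: "filterlim V at_top at_infinity"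
    and a_bdd: "bounded (range a)"
    and a_cont: "continuous_on UNIV a"
    and a_liminf: "Liminf at_infinity (\<lambda>t. ereal (a t)) = ereal a_inf"
    and a_inf_gt: "a_inf > (INF t. a t)"
    and a_inf_0: "(INF t. a t) = a 0"
    and a0_pos: "a 0 > 0"
    and eps_pos: "\<epsilon> > 0"
  shows "\<exists>xs. PS_seq V a \<epsilon> (B_eps V a \<epsilon>) xs"
proof -
  have bb: "bdd_below (range a)" using a_bdd by (rule bounded_imp_bdd_below)
  have amin: "\<And>t. a 0 \<le> a t"
  proof -
    fix t
    have "(INF t. a t) \<le> a t" by (rule cINF_lower[OF bb]) simp
    then show "a 0 \<le> a t" using a_inf_0 by simp
  qed
  interpret c: ctx V a \<epsilon>
    by (unfold_locales) (use V_diff V'_diff V''_cont V_nonneg V_zeros V_coercive a_bdd a_cont amin a0_pos eps_pos in auto)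
  show ?thesis by (rule c.ctx_main)
qed

end
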